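(* Under the standing assumptions, the matrices $\Gamma_{1,j}(a)$ ($0\le j\le n$) and $Q_{2,j}(a)$ ($0\le j\le n-1$) are invertible, and with $\mathbf r_j:=\Gamma_{1,j}(a)^{-1}\Theta_{1,j}(a)$ and $\mathbf t_j:=Q_{2,j}(a)^{-1}P_{2,j}(a)$ one has, for all $z\in\mathbb C$, $$d^{(2j+1)}(z)=\begin{pmatrix}I_q&\mathbf r_j\\0_q&I_q\end{pmatrix}\begin{pmatrix}I_q&0_q\\-(z-a)\mathbf m_j&I_q\end{pmatrix}\begin{pmatrix}I_q&-\mathbf r_j\\0_q&I_q\end{pmatrix},\qquad 0\le j\le n,$$ $$d^{(2j+2)}(z)=\begin{pmatrix}I_q&0_q\\-\mathbf t_j&I_q\end{pmatrix}\begin{pmatrix}I_q&(z-a)\mathbf l_j\\0_q&I_q\end{pmatrix}\begin{pmatrix}I_q&0_q\\ \mathbf t_j&I_q\end{pmatrix},\qquad 0\le j\le n-1.$$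
   Context: Let $q,n\in\mathbb N$ and let $a<b$ be real numbers. All matrices are complex; $I_q$, $0_q$ are the $q\times q$ identity and zero matrices. Let $s_0,\dots,s_{2n+1}$ be Hermitian $q\times q$ matrices and set $\widehat s_j:=-ab\,s_j+(a+b)s_{j+1}-s_{j+2}$. Define $H_{1,j}:=(s_{l+k})_{l,k=0}^j$, $H_{2,j}:=(\widehat s_{l+k})_{l,k=0}^{j}$, $K_{1,j}:=(bs_{l+k}-s_{l+k+1})_{l,k=0}^{j}$, $K_{2,j}:=(-as_{l+k}+s_{l+k+1})_{l,k=0}^j$. Standing assumption: $H_{1,n},H_{2,n-1},K_{1,n},K_{2,n}$ are positive definite. Let $T_0:=0_q$ and, for $j\ge1$, let $T_j$ be the $(j+1)\times(j+1)$ block matrix (blocks $q\times q$) with $I_q$ in block positions $(l+1,l)$, $l=0,\dots,j-1$, and $0_q$ elsewhere; $R_j(z):=(I_{(j+1)q}-zT_j)^{-1}$; $v_j:=\mathrm{col}(I_q,0_q,\dots,0_q)\in\mathbb C^{(j+1)q\times q}$. Let $u_{2,0}:=-(a+b)s_0+s_1$, $u_{2,j}:=\mathrm{col}(u_{2,0},-\widehat s_0,\dots,-\widehat s_{j-1})$, $\widetilde u_{1,j}:=\mathrm{col}(s_0,s_1-bs_0,\dots,s_j-bs_{j-1})$; for $j\ge1$, $Y_{2,j}:=\mathrm{col}(\widehat s_j,\dots,\widehat s_{2j-1})$, $\widetilde Y_{1,j}:=\mathrm{col}(bs_j-s_{j+1},\dots,bs_{2j-1}-s_{2j})$. Schur complements: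 $\widehat H_{2,0}:=\widehat s_0$, $\widehat H_{2,j}:=\widehat s_{2j}-Y_{2,j}^*H_{2,j-1}^{-1}Y_{2,j}$; $\widehat K_{1,0}:=bs_0-s_1$, $\widehat K_{1,j}:=bs_{2j}-s_{2j+1}-\widetilde Y_{1,j}^*K_{1,j-1}^{-1}\widetilde Y_{1,j}$. Polynomials: $P_{2,0}:=I_q$, $Q_{2,0}(z):=-(u_{2,0}+zs_0)$, $\Gamma_{1,0}:=I_q$, $\Theta_{1,0}:=s_0$; for $j\ge1$: $P_{2,j}(z):=(-Y_{2,j}^*H_{2,j-1}^{-1},I_q)R_j(z)v_j$, $Q_{2,j}(z):=-(-Y_{2,j}^*H_{2,j-1}^{-1},I_q)R_j(z)(u_{2,j}+zv_js_0)$, $\Gamma_{1,j}(z):=(-\widetilde Y_{1,j}^*K_{1,j-1}^{-1},I_q)R_j(z)v_j$, $\Theta_{1,j}(z):=(-\widetilde Y_{1,j}^*K_{1,j-1}^{-1},I_q)R_j(z)\widetilde u_{1,j}$. DSM parameters: $\lambda_j:=(u_{2,j}+av_js_0)^*R_j(a)^*H_{2,j}^{-1}R_j(a)(u_{2,j}+av_js_0)$, $\mu_j:=v_j^*R_j(a)^*K_{1,j}^{-1}R_j(a)v_j$; $\mathbf l_0:=\lambda_0$, $\mathbf l_j:=\lambda_j-\lambda_{j-1}$ ($1\le j\le n-1$); $\mathbf m_0:=\mu_0$, $\mathbf m_j:=\mu_j-\mu_{j-1}$ ($1\le j\le n$). Blaschke–Potapov factors: for $0\le j\le n-1$, $d^{(2j+2)}(z):=\begin{pmatrix}I_q+(z-a)Q_{2,j}^*(a)\widehat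 H_{2,j}^{-1}P_{2,j}(a) & (z-a)Q_{2,j}^*(a)\widehat H_{2,j}^{-1}Q_{2,j}(a)\\ -(z-a)P_{2,j}^*(a)\widehat H_{2,j}^{-1}P_{2,j}(a) & I_q-(z-a)P_{2,j}^*(a)\widehat H_{2,j}^{-1}Q_{2,j}(a)\end{pmatrix}$; for $0\le j\le n$, $d^{(2j+1)}(z):=\begin{pmatrix}I_q-(z-a)\Theta_{1,j}^*(a)\widehat K_{1,j}^{-1}\Gamma_{1,j}(a) & (z-a)\Theta_{1,j}^*(a)\widehat K_{1,j}^{-1}\Theta_{1,j}(a)\\ -(z-a)\Gamma_{1,j}^*(a)\widehat K_{1,j}^{-1}\Gamma_{1,j}(a) & I_q+(z-a)\Gamma_{1,j}^*(a)\widehat K_{1,j}^{-1}\Theta_{1,j}(a)\end{pmatrix}$. Here $F^*(a)$ means $(F(a))^*$. *)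

theory Defs
  imports Complex_Main "Jordan_Normal_Form.Matrix"
begin

definition adj :: "complex mat \<Rightarrow> complex mat" where
  "adj A = mat (dim_col A) (dim_row A) (\<lambda>(i,k). cnj (A $$ (k,i)))"

text \<open>Inverse of a square matrix (meaningful when it is invertible).\<close>
definition minv :: "complex mat \<Rightarrow> complex mat" where
  "minv A = (SOME B. B \<in> carrier_mat (dim_row A) (dim_row A) \<and>
                     A * B = 1\<^sub>m (dim_row A) \<and> B * A = 1\<^sub>m (dim_row A))"

definition pos_def :: "complex mat \<Rightarrow> bool" where
  "pos_def A \<longleftrightarrow> square_mat A \<and> adj A = A \<and>
     (\<forall>v. v \<in> carrier_vec (dim_row A) \<and> v \<noteq> 0\<^sub>v (dim_row A) \<longrightarrow>
          0 < Re (map_vec cnj v \<bullet> (A *\<^sub>v v)))"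

text \<open>Block matrix with N x M blocks, each block q x q, block (l,k) given by f l k.\<close>
definition bmat :: "nat \<Rightarrow> nat \<Rightarrow> nat \<Rightarrow> (nat \<Rightarrow> nat \<Rightarrow> complex mat) \<Rightarrow> complex mat" where
  "bmat q N M f = mat (N*q) (M*q) (\<lambda>(i,k). f (i div q) (k div q) $$ (i mod q, k mod q))"

definition bcol :: "nat \<Rightarrow> nat \<Rightarrow> (nat \<Rightarrow> complex mat) \<Rightarrow> complex mat" where
  "bcol q N f = bmat q N 1 (\<lambda>l k. f l)"

text \<open>Horizontal concatenation (A, B).\<close>
definition rowcat :: "complex mat \<Rightarrow> complex mat \<Rightarrow> complex mat" where
  "rowcat A B = four_block_mat A B (0\<^sub>m 0 (dim_col A)) (0\<^sub>m 0 (dim_col B))"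

abbreviation blk2 :: "complex mat \<Rightarrow> complex mat \<Rightarrow> complex mat \<Rightarrow> complex mat \<Rightarrow> complex mat" where
  "blk2 A B C D \<equiv> four_block_mat A B C D"

definition shat :: "real \<Rightarrow> real \<Rightarrow> (nat \<Rightarrow> complex mat) \<Rightarrow> nat \<Rightarrow> complex mat" where
  "shat a b s j = (complex_of_real (-(a*b))) \<cdot>\<^sub>m s j + (complex_of_real (a+b)) \<cdot>\<^sub>m s (j+1) - s (j+2)"

definition H1 :: "nat \<Rightarrow> (nat \<Rightarrow> complex mat) \<Rightarrow> nat \<Rightarrow> complex mat" where
  "H1 q s j = bmat q (j+1) (j+1) (\<lambda>l k. s (l+k))"

definition H2 :: "nat \<Rightarrow> real \<Rightarrow> real \<Rightarrow> (nat \<Rightarrow> complex mat) \<Rightarrow> nat \<Rightarrow> complex mat" where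
  "H2 q a b s j = bmat q (j+1) (j+1) (\<lambda>l k. shat a b s (l+k))"

definition K1 :: "nat \<Rightarrow> real \<Rightarrow> (nat \<Rightarrow> complex mat) \<Rightarrow> nat \<Rightarrow> complex mat" where
  "K1 q b s j = bmat q (j+1) (j+1) (\<lambda>l k. complex_of_real b \<cdot>\<^sub>m s (l+k) - s (l+k+1))"

definition K2 :: "nat \<Rightarrow> real \<Rightarrow> (nat \<Rightarrow> complex mat) \<Rightarrow> nat \<Rightarrow> complex mat" where
  "K2 q a s j = bmat q (j+1) (j+1) (\<lambda>l k. - (complex_of_real a \<cdot>\<^sub>m s (l+k)) + s (l+k+1))"

definition Tm :: "nat \<Rightarrow> nat \<Rightarrow> complex mat" where
  "Tm q j = bmat q (j+1) (j+1) (\<lambda>l k. if l = k+1 then 1\<^sub>m q else 0\<^sub>m q q)"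

definition Rm :: "nat \<Rightarrow> nat \<Rightarrow> complex \<Rightarrow> complex mat" where
  "Rm q j z = minv (1\<^sub>m ((j+1)*q) - z \<cdot>\<^sub>m Tm q j)"

definition vv :: "nat \<Rightarrow> nat \<Rightarrow> complex mat" where
  "vv q j = bcol q (j+1) (\<lambda>l. if l = 0 then 1\<^sub>m q else 0\<^sub>m q q)"

definition u20 :: "real \<Rightarrow> real \<Rightarrow> (nat \<Rightarrow> complex mat) \<Rightarrow> complex mat" where
  "u20 a b s = - (complex_of_real (a+b) \<cdot>\<^sub>m s 0) + s 1"

definition u2 :: "nat \<Rightarrow> real \<Rightarrow> real \<Rightarrow> (nat \<Rightarrow> complex mat) \<Rightarrow> nat \<Rightarrow> complex mat" where
  "u2 q a b s j = bcol q (j+1) (\<lambda>l. if l = 0 then u20 a b s else - shat a b s (l-1))"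

definition ut1 :: "nat \<Rightarrow> real \<Rightarrow> (nat \<Rightarrow> complex mat) \<Rightarrow> nat \<Rightarrow> complex mat" where
  "ut1 q b s j = bcol q (j+1) (\<lambda>l. if l = 0 then s 0 else s l - complex_of_real b \<cdot>\<^sub>m s (l-1))"

text \<open>Y_{2,j} = col(shat_j, ..., shat_{2j-1}) (used for j >= 1).\<close>
definition Y2 :: "nat \<Rightarrow> real \<Rightarrow> real \<Rightarrow> (nat \<Rightarrow> complex mat) \<Rightarrow> nat \<Rightarrow> complex mat" where
  "Y2 q a b s j = bcol q j (\<lambda>l. shat a b s (j+l))"

text \<open>Ytilde_{1,j} = col(b s_j - s_{j+1}, ..., b s_{2j-1} - s_{2j}) (used for j >= 1).\<close>
definition Yt1 :: "nat \<Rightarrow> real \<Rightarrow> (nat \<Rightarrow> complex mat) \<Rightarrow> nat \<Rightarrow> complex mat" where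
  "Yt1 q b s j = bcol q j (\<lambda>l. complex_of_real b \<cdot>\<^sub>m s (j+l) - s (j+l+1))"

definition Hhat2 :: "nat \<Rightarrow> real \<Rightarrow> real \<Rightarrow> (nat \<Rightarrow> complex mat) \<Rightarrow> nat \<Rightarrow> complex mat" where
  "Hhat2 q a b s j = (if j = 0 then shat a b s 0
     else shat a b s (2*j) - adj (Y2 q a b s j) * minv (H2 q a b s (j-1)) * Y2 q a b s j)"

definition Khat1 :: "nat \<Rightarrow> real \<Rightarrow> (nat \<Rightarrow> complex mat) \<Rightarrow> nat \<Rightarrow> complex mat" where
  "Khat1 q b s j = (if j = 0 then complex_of_real b \<cdot>\<^sub>m s 0 - s 1
     else complex_of_real b \<cdot>\<^sub>m s (2*j) - s (2*j+1)
          - adj (Yt1 q b s j) * minv (K1 q b s (j-1)) * Yt1 q b s j)"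

definition P2 :: "nat \<Rightarrow> real \<Rightarrow> real \<Rightarrow> (nat \<Rightarrow> complex mat) \<Rightarrow> nat \<Rightarrow> complex \<Rightarrow> complex mat" where
  "P2 q a b s j z = (if j = 0 then 1\<^sub>m q
     else rowcat (- (adj (Y2 q a b s j) * minv (H2 q a b s (j-1)))) (1\<^sub>m q) * Rm q j z * vv q j)"

definition Q2 :: "nat \<Rightarrow> real \<Rightarrow> real \<Rightarrow> (nat \<Rightarrow> complex mat) \<Rightarrow> nat \<Rightarrow> complex \<Rightarrow> complex mat" where
  "Q2 q a b s j z = (if j = 0 then - (u20 a b s + z \<cdot>\<^sub>m s 0)
     else - (rowcat (- (adj (Y2 q a b s j) * minv (H2 q a b s (j-1)))) (1\<^sub>m q) * Rm q j z
             * (u2 q a b s j + z \<cdot>\<^sub>m (vv q j * s 0))))"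

definition Gam1 :: "nat \<Rightarrow> real \<Rightarrow> (nat \<Rightarrow> complex mat) \<Rightarrow> nat \<Rightarrow> complex \<Rightarrow> complex mat" where
  "Gam1 q b s j z = (if j = 0 then 1\<^sub>m q
     else rowcat (- (adj (Yt1 q b s j) * minv (K1 q b s (j-1)))) (1\<^sub>m q) * Rm q j z * vv q j)"

definition The1 :: "nat \<Rightarrow> real \<Rightarrow> (nat \<Rightarrow> complex mat) \<Rightarrow> nat \<Rightarrow> complex \<Rightarrow> complex mat" where
  "The1 q b s j z = (if j = 0 then s 0
     else rowcat (- (adj (Yt1 q b s j) * minv (K1 q b s (j-1)))) (1\<^sub>m q) * Rm q j z * ut1 q b s j)"

definition lam :: "nat \<Rightarrow> real \<Rightarrow> real \<Rightarrow> (nat \<Rightarrow> complex mat) \<Rightarrow> nat \<Rightarrow> complex mat" where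
  "lam q a b s j =
     (let w = u2 q a b s j + complex_of_real a \<cdot>\<^sub>m (vv q j * s 0);
          R = Rm q j (complex_of_real a)
      in adj w * adj R * minv (H2 q a b s j) * R * w)"

definition mu :: "nat \<Rightarrow> real \<Rightarrow> real \<Rightarrow> (nat \<Rightarrow> complex mat) \<Rightarrow> nat \<Rightarrow> complex mat" where
  "mu q a b s j =
     (let R = Rm q j (complex_of_real a)
      in adj (vv q j) * adj R * minv (K1 q b s j) * R * vv q j)"

definition lbold :: "nat \<Rightarrow> real \<Rightarrow> real \<Rightarrow> (nat \<Rightarrow> complex mat) \<Rightarrow> nat \<Rightarrow> complex mat" where
  "lbold q a b s j = (if j = 0 then lam q a b s 0 else lam q a b s j - lam q a b s (j-1))"

definition mbold :: "nat \<Rightarrow> real \<Rightarrow> real \<Rightarrow> (nat \<Rightarrow> complex mat) \<Rightarrow> nat \<Rightarrow> complex mat" where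
  "mbold q a b s j = (if j = 0 then mu q a b s 0 else mu q a b s j - mu q a b s (j-1))"

text \<open>Blaschke--Potapov factor d^{(2j+2)}.\<close>
definition deven :: "nat \<Rightarrow> real \<Rightarrow> real \<Rightarrow> (nat \<Rightarrow> complex mat) \<Rightarrow> nat \<Rightarrow> complex \<Rightarrow> complex mat" where
  "deven q a b s j z =
    (let P = P2 q a b s j (complex_of_real a); Q = Q2 q a b s j (complex_of_real a);
         Hi = minv (Hhat2 q a b s j); c = z - complex_of_real a
     in blk2 (1\<^sub>m q + c \<cdot>\<^sub>m (adj Q * Hi * P)) (c \<cdot>\<^sub>m (adj Q * Hi * Q))
             (- (c \<cdot>\<^sub>m (adj P * Hi * P))) (1\<^sub>m q - c \<cdot>\<^sub>m (adj P * Hi * Q)))"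

text \<open>Blaschke--Potapov factor d^{(2j+1)}.\<close>
definition dodd :: "nat \<Rightarrow> real \<Rightarrow> real \<Rightarrow> (nat \<Rightarrow> complex mat) \<Rightarrow> nat \<Rightarrow> complex \<Rightarrow> complex mat" where
  "dodd q a b s j z =
    (let G = Gam1 q b s j (complex_of_real a); T = The1 q b s j (complex_of_real a);
         Ki = minv (Khat1 q b s j); c = z - complex_of_real a
     in blk2 (1\<^sub>m q - c \<cdot>\<^sub>m (adj T * Ki * G)) (c \<cdot>\<^sub>m (adj T * Ki * T))
             (- (c \<cdot>\<^sub>m (adj G * Ki * G))) (1\<^sub>m q + c \<cdot>\<^sub>m (adj G * Ki * T)))"

end

theory Submission
  imports Defs "Jordan_Normal_Form.Determinant"
begin

lemma mult_entry:
  assumes "A \<in> carrier_mat n m" "B \<in> carrier_mat m p" "i < n" "k < p"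
  shows "(A * B) $$ (i,k) = (\<Sum>t<m. A $$ (i,t) * B $$ (t,k))"
  using assms by (auto simp: scalar_prod_def atLeast0LessThan intro!: sum.cong)

lemma assoc_dims: "dim_col A = dim_row B \<Longrightarrow> dim_col B = dim_row C \<Longrightarrow> A * B * C = A * (B * C)"
  by (rule assoc_mult_mat[of A "dim_row A" "dim_col A" B "dim_col B" C "dim_col C"]) auto

lemma adj_carrier[simp]: "A \<in> carrier_mat n m \<Longrightarrow> adj A \<in> carrier_mat m n"
  by (auto simp: adj_def)
lemma adj_dims[simp]: "dim_row (adj A) = dim_col A" "dim_col (adj A) = dim_row A"
  by (auto simp: adj_def)
lemma adj_index[simp]: "i < dim_col A \<Longrightarrow> k < dim_row A \<Longrightarrow> adj A $$ (i,k) = cnj (A $$ (k,i))"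
  by (auto simp: adj_def)
lemma adj_adj[simp]: "adj (adj A) = A"
  by (rule eq_matI) (auto simp: adj_def)

lemma adj_mult:
  assumes "A \<in> carrier_mat n m" "B \<in> carrier_mat m p"
  shows "adj (A * B) = adj B * adj A"
proof (rule eq_matI)
  fix i k assume ik: "i < dim_row (adj B * adj A)" "k < dim_col (adj B * adj A)"
  hence i: "i < p" and k: "k < n" using assms by auto
  have "adj (A * B) $$ (i,k) = cnj ((A*B) $$ (k,i))" using assms i k by auto
  also have "\<dots> = (\<Sum>t<m. cnj (A $$ (k,t)) * cnj (B $$ (t,i)))"
    using mult_entry[OF assms k i] by simp
  also have "\<dots> = (\<Sum>t<m. adj B $$ (i,t) * adj A $$ (t,k))"
    using assms i k by (auto intro!: sum.cong)
  also have "\<dots> = (adj B * adj A) $$ (i,k)"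
    using mult_entry[of "adj B" p m "adj A" n i k] assms i k by simp
  finally show "adj (A * B) $$ (i,k) = (adj B * adj A) $$ (i,k)" .
qed (use assms in auto)

lemma adj_add: "A \<in> carrier_mat n m \<Longrightarrow> B \<in> carrier_mat n m \<Longrightarrow> adj (A + B) = adj A + adj B"
  by (rule eq_matI) (auto simp: adj_def)
lemma adj_minus: "A \<in> carrier_mat n m \<Longrightarrow> B \<in> carrier_mat n m \<Longrightarrow> adj (A - B) = adj A - adj B"
  by (rule eq_matI) (auto simp: adj_def)
lemma adj_uminus: "adj (- A) = - adj A"
  by (rule eq_matI) (auto simp: adj_def)
lemma adj_smult: "adj (c \<cdot>\<^sub>m A) = cnj c \<cdot>\<^sub>m adj A"
  by (rule eq_matI) (auto simp: adj_def)
lemma adj_one[simp]: "adj (1\<^sub>m n) = 1\<^sub>m n"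
  by (rule eq_matI) (auto simp: adj_def)
lemma adj_zero[simp]: "adj (0\<^sub>m n m) = 0\<^sub>m m n"
  by (rule eq_matI) (auto simp: adj_def)

lemma adj_four_block:
  assumes "A \<in> carrier_mat nr1 nc1" "B \<in> carrier_mat nr1 nc2"
  "C \<in> carrier_mat nr2 nc1" "D \<in> carrier_mat nr2 nc2"
  shows "adj (four_block_mat A B C D) = four_block_mat (adj A) (adj C) (adj B) (adj D)"
  by (rule eq_matI) (use assms in \<open>auto simp: adj_def\<close>)

lemma adj_rowcat:
  assumes "A \<in> carrier_mat q m" "B \<in> carrier_mat q p"
  shows "adj (rowcat A B) = adj A @\<^sub>r adj B"
proof -
  have "adj (rowcat A B) = adj (four_block_mat A B (0\<^sub>m 0 m) (0\<^sub>m 0 p))"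
    unfolding rowcat_def using assms by auto
  also have "\<dots> = four_block_mat (adj A) (adj (0\<^sub>m 0 m)) (adj B) (adj (0\<^sub>m 0 p))"
    by (rule adj_four_block) (use assms in auto)
  also have "\<dots> = adj A @\<^sub>r adj B" unfolding append_rows_def using assms by auto
  finally show ?thesis .
qed

lemma carrier_rowcat[simp]:
  "A \<in> carrier_mat q m \<Longrightarrow> B \<in> carrier_mat q p \<Longrightarrow> rowcat A B \<in> carrier_mat q (m+p)"
  unfolding rowcat_def by auto

lemma rowcat_mult_append:
  assumes "A \<in> carrier_mat q m" "B \<in> carrier_mat q p" "C \<in> carrier_mat m r" "D \<in> carrier_mat p r"
  shows "rowcat A B * (C @\<^sub>r D) = A * C + B * D"
proof -
  have e1: "rowcat A B = four_block_mat A B (0\<^sub>m 0 m) (0\<^sub>m 0 p)"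
    unfolding rowcat_def using assms by auto
  have e2: "C @\<^sub>r D = four_block_mat C (0\<^sub>m m 0) D (0\<^sub>m p 0)"
    unfolding append_rows_def using assms by auto
  have "rowcat A B * (C @\<^sub>r D) = four_block_mat (A * C + B * D) (A * 0\<^sub>m m 0 + B * 0\<^sub>m p 0)
     (0\<^sub>m 0 m * C + 0\<^sub>m 0 p * D) (0\<^sub>m 0 m * 0\<^sub>m m 0 + 0\<^sub>m 0 p * 0\<^sub>m p 0)"
    unfolding e1 e2 using assms
    by (intro mult_four_block_mat) auto
  also have "\<dots> = A * C + B * D"
    by (rule eq_matI) (use assms in auto)
  finally show ?thesis .
qed

lemma append_rows_mult:
  assumes "A \<in> carrier_mat m r" "B \<in> carrier_mat p r" "C \<in> carrier_mat r k"
  shows "(A @\<^sub>r B) * C = (A * C) @\<^sub>r (B * C)"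
proof -
  have "(A @\<^sub>r B) * C = four_block_mat A (0\<^sub>m m 0) B (0\<^sub>m p 0) * four_block_mat C (0\<^sub>m r 0) (0\<^sub>m 0 k) (0\<^sub>m 0 0)"
    unfolding append_rows_def using assms
    by (intro arg_cong2[where f="(*)"], auto)
  also have "\<dots> = four_block_mat (A * C + 0\<^sub>m m 0 * 0\<^sub>m 0 k) (A * 0\<^sub>m r 0 + 0\<^sub>m m 0 * 0\<^sub>m 0 0)
     (B * C + 0\<^sub>m p 0 * 0\<^sub>m 0 k) (B * 0\<^sub>m r 0 + 0\<^sub>m p 0 * 0\<^sub>m 0 0)"
    using assms by (intro mult_four_block_mat) auto
  also have "\<dots> = (A * C) @\<^sub>r (B * C)"
    unfolding append_rows_def by (rule eq_matI) (use assms in auto)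
  finally show ?thesis .
qed

lemma minv:
  assumes "invertible_mat A" "A \<in> carrier_mat n n"
  shows "minv A \<in> carrier_mat n n" "A * minv A = 1\<^sub>m n" "minv A * A = 1\<^sub>m n"
proof -
  from assms obtain B where B: "A * B = 1\<^sub>m n" "B * A = 1\<^sub>m (dim_row B)"
    unfolding invertible_mat_def inverts_mat_def by auto
  have "dim_col B = n" using arg_cong[OF B(1), of dim_col] by simp
  moreover have "dim_row B = n" using arg_cong[OF B(2), of dim_col] assms by simp
  ultimately have Bc: "B \<in> carrier_mat n n" by auto
  have ex: "\<exists>B. B \<in> carrier_mat (dim_row A) (dim_row A) \<and> A * B = 1\<^sub>m (dim_row A) \<and> B * A = 1\<^sub>m (dim_row A)"
    using B Bc assms by auto
  from someI_ex[OF ex] show "minv A \<in> carrier_mat n n" "A * minv A = 1\<^sub>m n" "minv A * A = 1\<^sub>m n"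
    unfolding minv_def using assms by auto
qed

lemma minv_unique:
  assumes "invertible_mat A" "A \<in> carrier_mat n n" "B \<in> carrier_mat n n" "A * B = 1\<^sub>m n"
  shows "minv A = B"
proof -
  note m = minv[OF assms(1,2)]
  have "minv A = minv A * (A * B)" using assms m by simp
  also have "\<dots> = (minv A * A) * B" using assms m by (metis assoc_mult_mat)
  also have "\<dots> = B" using m assms by simp
  finally show ?thesis .
qed

lemma det_invertible:
  assumes "A \<in> carrier_mat n n" "det A \<noteq> 0"
  shows "invertible_mat (A :: complex mat)"
proof -
  have "A \<in> Units (ring_mat TYPE(complex) n ())" by (rule det_non_zero_imp_unit[OF assms])
  then obtain B where B: "B \<in> carrier_mat n n" "B * A = 1\<^sub>m n" "A * B = 1\<^sub>m n"
    unfolding Units_def ring_mat_def by auto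
  thus ?thesis using assms unfolding invertible_mat_def inverts_mat_def by auto
qed

lemma inv_crit:
  assumes A: "A \<in> carrier_mat n n"
    and K: "\<And>X. X \<in> carrier_mat n 1 \<Longrightarrow> A * X = 0\<^sub>m n 1 \<Longrightarrow> X = 0\<^sub>m n 1"
  shows "invertible_mat (A :: complex mat)"
proof (rule det_invertible[OF A], rule notI)
  assume "det A = 0"
  then obtain v where v: "v \<in> carrier_vec n" "v \<noteq> 0\<^sub>v n" "A *\<^sub>v v = 0\<^sub>v n"
    using det_0_iff_vec_prod_zero[OF A] by auto
  let ?X = "mat_of_cols n [v]"
  have X: "?X \<in> carrier_mat n 1" by auto
  have "A * ?X = 0\<^sub>m n 1"
  proof (rule eq_matI)
    fix i k assume "i < dim_row (0\<^sub>m n 1 :: complex mat)" "k < dim_col (0\<^sub>m n 1 :: complex mat)"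
    hence ik: "i < n" "k = 0" by auto
    have "(A * ?X) $$ (i,k) = row A i \<bullet> col ?X 0" using A ik by auto
    also have "col ?X 0 = v" using v by simp
    also have "row A i \<bullet> v = (A *\<^sub>v v) $ i" using A ik by auto
    finally show "(A * ?X) $$ (i,k) = 0\<^sub>m n 1 $$ (i,k)" using v ik by simp
  qed (use A in auto)
  hence "?X = 0\<^sub>m n 1" using K X by auto
  hence "col ?X 0 = col (0\<^sub>m n 1) 0" by simp
  hence "v = 0\<^sub>v n" using v by simp
  with v show False by simp
qed

lemma invertible_carrier: "invertible_mat A \<Longrightarrow> A \<in> carrier_mat (dim_row A) (dim_row A)"
  unfolding invertible_mat_def square_mat.simps by auto

lemma invertible_kernel:
  assumes "invertible_mat (A::complex mat)" "A \<in> carrier_mat n n" "X \<in> carrier_mat n k" "A * X = 0\<^sub>m n k"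
  shows "X = 0\<^sub>m n k"
proof -
  note m = minv[OF assms(1,2)]
  have "X = (minv A * A) * X" using m assms by simp
  also have "\<dots> = minv A * (A * X)" using m assms by (metis assoc_mult_mat)
  also have "\<dots> = 0\<^sub>m n k" using assms m by simp
  finally show ?thesis .
qed

lemma minv_adj:
  assumes "invertible_mat A" "A \<in> carrier_mat n n" "adj A = A"
  shows "adj (minv A) = minv A"
proof -
  note m = minv[OF assms(1,2)]
  have e: "adj (minv A * A) = adj A * adj (minv A)"
    by (rule adj_mult) (use m assms in auto)
  have "adj (minv A * A) = 1\<^sub>m n" using m(3) by simp
  hence "A * adj (minv A) = 1\<^sub>m n" using e assms(3) by metis
  thus ?thesis using minv_unique[OF assms(1,2), of "adj (minv A)"] m by simp
qed

definition wpd :: "nat \<Rightarrow> complex mat \<Rightarrow> bool" where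
  "wpd n A \<longleftrightarrow> A \<in> carrier_mat n n \<and> adj A = A \<and>
     (\<forall>X \<in> carrier_mat n 1. adj X * A * X = 0\<^sub>m 1 1 \<longrightarrow> X = 0\<^sub>m n 1)"

lemma wpd_inv: assumes "wpd n A" shows "invertible_mat A"
proof -
  have A: "A \<in> carrier_mat n n" using assms wpd_def by auto
  show ?thesis
  proof (rule inv_crit[OF A])
    fix X assume X: "X \<in> carrier_mat n 1" "A * X = 0\<^sub>m n 1"
    have "adj X * A * X = adj X * (A * X)" using A X by (simp add: assoc_mult_mat[of _ 1 n _ n _ 1])
    also have "\<dots> = 0\<^sub>m 1 1" using X by simp
    finally show "X = 0\<^sub>m n 1" using assms X unfolding wpd_def by auto
  qed
qed

lemma wpd_sub:
  assumes "wpd n A" "P \<in> carrier_mat n m" "adj P * P = 1\<^sub>m m"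
  shows "wpd m (adj P * A * P)"
proof -
  have A: "A \<in> carrier_mat n n" "adj A = A" using assms wpd_def by auto
  have c: "adj P * A * P \<in> carrier_mat m m" using A assms by auto
  have h: "adj (adj P * A * P) = adj P * A * P"
  proof -
    have "adj (adj P * A * P) = adj P * adj (adj P * A)"
      by (rule adj_mult) (use A assms in auto)
    also have "adj (adj P * A) = adj A * adj (adj P)"
      by (rule adj_mult) (use A assms in auto)
    finally show ?thesis using A assms by (simp add: assoc_mult_mat[of _ m n _ n _ m])
  qed
  { fix X assume X: "X \<in> carrier_mat m 1" "adj X * (adj P * A * P) * X = 0\<^sub>m 1 1"
    have "adj (P * X) * A * (P * X) = adj X * (adj P * A * P) * X"
      using A X assms by (simp add: adj_mult[of P n m X 1] assoc_dims carrier_matD)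
    hence "P * X = 0\<^sub>m n 1" using X assms A unfolding wpd_def by (metis mult_carrier_mat)
    hence "adj P * (P * X) = 0\<^sub>m m 1" using assms by simp
    hence "X = 0\<^sub>m m 1" using assms X by (simp add: assoc_mult_mat[symmetric, of _ m n _ m _ 1])
  }
  thus ?thesis using c h unfolding wpd_def by auto
qed


lemma sum_delta_r: "c < (N::nat) \<Longrightarrow> (\<Sum>t<N. f t * (if t = c then 1 else 0)) = (f c :: complex)"
proof -
  assume c: "c < N"
  have "(\<Sum>t<N. f t * (if t = c then 1 else 0)) = (\<Sum>t<N. if t = c then f t else 0)"
    by (rule sum.cong) auto
  also have "\<dots> = f c" using c by (subst sum.delta) auto
  finally show ?thesis .
qed

lemma sum_delta_l: "c < (N::nat) \<Longrightarrow> (\<Sum>t<N. (if t = c then 1 else 0) * f t) = (f c :: complex)"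
  using sum_delta_r[of c N f] by (simp add: mult.commute)

lemma sum_shift_ind: "(\<Sum>t<(N::nat). (if i = t + (q::nat) then 1 else 0) * f t) = (if q \<le> i \<and> i - q < N then f (i - q) else (0::complex))"
proof -
  have "(\<Sum>t<N. (if i = t + q then 1 else 0) * f t) = (\<Sum>t<N. if t = i - q \<and> q \<le> i then f t else 0)"
    by (rule sum.cong) auto
  also have "\<dots> = (\<Sum>t<N. if t = i - q then (if q \<le> i then f t else 0) else 0)"
    by (rule sum.cong) auto
  also have "\<dots> = (if q \<le> i \<and> i - q < N then f (i - q) else 0)"
    by (subst sum.delta) auto
  finally show ?thesis .
qed

lemma sum_shift_ind2: "(\<Sum>t<(N::nat). f t * (if t = i + (q::nat) then 1 else 0)) = (if i + q < N then f (i + q) else (0::complex))"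
proof -
  have "(\<Sum>t<N. f t * (if t = i + q then 1 else 0)) = (\<Sum>t<N. if t = i + q then f t else 0)"
    by (rule sum.cong) auto
  also have "\<dots> = (if i + q < N then f (i + q) else 0)" by (subst sum.delta) auto
  finally show ?thesis .
qed

lemma divmod_shift: "0 < (q::nat) \<Longrightarrow> (i div q = t div q + 1 \<and> i mod q = t mod q) \<longleftrightarrow> i = t + q"
proof
  assume q: "0 < q" and h: "i div q = t div q + 1 \<and> i mod q = t mod q"
  have "i = q * (i div q) + i mod q" by simp
  also have "\<dots> = q * (t div q) + t mod q + q" using h by (simp add: algebra_simps)
  also have "\<dots> = t + q" by simp
  finally show "i = t + q" .
next
  assume q: "0 < q" and "i = t + q"
  thus "i div q = t div q + 1 \<and> i mod q = t mod q" by simp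
qed

lemma bmat_carrier[simp]: "bmat q N M f \<in> carrier_mat (N*q) (M*q)"
  by (simp add: bmat_def)
lemma bmat_dims[simp]: "dim_row (bmat q N M f) = N*q" "dim_col (bmat q N M f) = M*q"
  by (auto simp add: bmat_def)
lemma bmat_index: "i < N*q \<Longrightarrow> k < M*q \<Longrightarrow> bmat q N M f $$ (i,k) = f (i div q) (k div q) $$ (i mod q, k mod q)"
  by (simp add: bmat_def)
lemma bcol_carrier[simp]: "bcol q N f \<in> carrier_mat (N*q) q"
  by (simp add: bcol_def bmat_def)
lemma bcol_dims[simp]: "dim_row (bcol q N f) = N*q" "dim_col (bcol q N f) = q"
  by (auto simp add: bcol_def)
lemma bcol_index: "i < N*q \<Longrightarrow> k < q \<Longrightarrow> bcol q N f $$ (i,k) = f (i div q) $$ (i mod q, k)"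
  by (simp add: bcol_def bmat_def)

lemma Tm_index: assumes "0 < q" "i < (j+1)*q" "t < (j+1)*q"
  shows "Tm q j $$ (i,t) = (if i = t + q then 1 else 0)"
proof -
  have m: "i mod q < q" "t mod q < q" using assms by auto
  have "Tm q j $$ (i,t) = (if i div q = t div q + 1 then 1\<^sub>m q else 0\<^sub>m q q) $$ (i mod q, t mod q)"
    unfolding Tm_def using assms by (simp only: bmat_index)
  also have "\<dots> = (if i div q = t div q + 1 \<and> i mod q = t mod q then 1 else 0)"
    using m by auto
  also have "\<dots> = (if i = t + q then 1 else 0)" using divmod_shift[OF assms(1)] by simp
  finally show ?thesis .
qed

lemma Tm_carrier[simp]: "Tm q j \<in> carrier_mat ((j+1)*q) ((j+1)*q)"
  unfolding Tm_def bmat_def by simp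

lemma vv_carrier[simp]: "vv q j \<in> carrier_mat ((j+1)*q) q"
  unfolding vv_def bcol_def bmat_def by simp

lemma vv_index: assumes "0 < q" "i < (j+1)*q" "k < q"
  shows "vv q j $$ (i,k) = (if i = k then 1 else 0)"
proof -
  have "vv q j $$ (i,k) = (if i div q = 0 then 1\<^sub>m q else 0\<^sub>m q q) $$ (i mod q, k)"
    unfolding vv_def using assms by (simp only: bcol_index)
  also have "\<dots> = (if i = k then 1 else 0)"
    using assms by (cases "i < q") (auto simp: div_greater_zero_iff)
  finally show ?thesis .
qed

definition Sel :: "nat \<Rightarrow> nat \<Rightarrow> complex mat" where
  "Sel N M = mat N M (\<lambda>(i,k). if i = k then 1 else 0)"

lemma Sel_carrier[simp]: "Sel N M \<in> carrier_mat N M" by (simp add: Sel_def)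
lemma Sel_dims[simp]: "dim_row (Sel N M) = N" "dim_col (Sel N M) = M" by (auto simp add: Sel_def)

lemma Sel_left: assumes "B \<in> carrier_mat N p" "M \<le> N" "i < M" "k < p"
  shows "(adj (Sel N M) * B) $$ (i,k) = B $$ (i,k)"
proof -
  have "(adj (Sel N M) * B) $$ (i,k) = (\<Sum>t<N. adj (Sel N M) $$ (i,t) * B $$ (t,k))"
    using assms by (intro mult_entry[of _ M N _ p]) auto
  also have "\<dots> = (\<Sum>t<N. (if t = i then 1 else 0) * B $$ (t,k))"
    using assms by (intro sum.cong) (auto simp: Sel_def)
  also have "\<dots> = B $$ (i,k)" using assms by (intro sum_delta_l) auto
  finally show ?thesis .
qed

lemma Sel_right: assumes "B \<in> carrier_mat p N" "M \<le> N" "i < p" "k < M"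
  shows "(B * Sel N M) $$ (i,k) = B $$ (i,k)"
proof -
  have "(B * Sel N M) $$ (i,k) = (\<Sum>t<N. B $$ (i,t) * Sel N M $$ (t,k))"
    using assms by (intro mult_entry[of _ p N _ M]) auto
  also have "\<dots> = (\<Sum>t<N. B $$ (i,t) * (if t = k then 1 else 0))"
    using assms by (intro sum.cong) (auto simp: Sel_def)
  also have "\<dots> = B $$ (i,k)" using assms by (intro sum_delta_r) auto
  finally show ?thesis .
qed

lemma Sel_sub: assumes "B \<in> carrier_mat N N" "M \<le> N" "i < M" "k < M"
  shows "(adj (Sel N M) * B * Sel N M) $$ (i,k) = B $$ (i,k)"
proof -
  have "(adj (Sel N M) * B * Sel N M) $$ (i,k) = (adj (Sel N M) * B) $$ (i,k)"
  proof (rule Sel_right[of _ M])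
    show "adj (Sel N M) * B \<in> carrier_mat M N" using assms by (metis Sel_carrier adj_carrier mult_carrier_mat)
  qed (use assms in auto)
  also have "\<dots> = B $$ (i,k)" using assms by (intro Sel_left[of B N N M]) auto
  finally show ?thesis .
qed

lemma Sel_unit: assumes "M \<le> N" shows "adj (Sel N M) * Sel N M = 1\<^sub>m M"
proof (rule eq_matI)
  fix i k assume "i < dim_row (1\<^sub>m M :: complex mat)" "k < dim_col (1\<^sub>m M :: complex mat)"
  hence ik: "i < M" "k < M" by auto
  have "(adj (Sel N M) * Sel N M) $$ (i,k) = Sel N M $$ (i,k)"
    using assms ik by (intro Sel_left) auto
  thus "(adj (Sel N M) * Sel N M) $$ (i,k) = 1\<^sub>m M $$ (i,k)" using assms ik by (simp add: Sel_def)
qed auto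

lemma bmat_principal:
  assumes "M \<le> N"
  shows "adj (Sel (N*q) (M*q)) * bmat q N N f * Sel (N*q) (M*q) = bmat q M M f"
proof (rule eq_matI)
  fix i k assume "i < dim_row (bmat q M M f)" "k < dim_col (bmat q M M f)"
  hence ik: "i < M*q" "k < M*q" by auto
  have MN: "M*q \<le> N*q" using assms by simp
  have "(adj (Sel (N*q) (M*q)) * bmat q N N f * Sel (N*q) (M*q)) $$ (i,k) = bmat q N N f $$ (i,k)"
    using ik MN by (intro Sel_sub) auto
  also have "\<dots> = bmat q M M f $$ (i,k)"
  proof -
    have "i < N*q" "k < N*q" using ik MN by (meson less_le_trans)+
    thus ?thesis using ik by (simp add: bmat_index)
  qed
  finally show "(adj (Sel (N*q) (M*q)) * bmat q N N f * Sel (N*q) (M*q)) $$ (i,k) = bmat q M M f $$ (i,k)" .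
qed auto

lemma wpd_principal:
  assumes "wpd (N*q) (bmat q N N f)" "M \<le> N"
  shows "wpd (M*q) (bmat q M M f)"
proof -
  have "M*q \<le> N*q" using assms by simp
  from wpd_sub[OF assms(1) Sel_carrier Sel_unit[OF this]] show ?thesis
    using bmat_principal[OF assms(2), of q f] by simp
qed

lemma pos_def_wpd: assumes "pos_def A" "A \<in> carrier_mat n n" shows "wpd n A"
proof -
  { fix X assume X: "X \<in> carrier_mat n 1" "adj X * A * X = 0\<^sub>m 1 1"
    let ?v = "col X 0"
    have v: "?v \<in> carrier_vec n" using X by auto
    have "map_vec cnj ?v \<bullet> (A *\<^sub>v ?v) = (\<Sum>u<n. cnj (X $$ (u,0)) * (\<Sum>t<n. A $$ (u,t) * X $$ (t,0)))"
      using X assms by (auto simp: scalar_prod_def atLeast0LessThan intro!: sum.cong)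
    also have "\<dots> = (\<Sum>t<n. (\<Sum>u<n. cnj (X $$ (u,0)) * A $$ (u,t)) * X $$ (t,0))"
      by (simp add: sum_distrib_left sum_distrib_right mult.assoc) (rule sum.swap)
    also have "\<dots> = (adj X * A * X) $$ (0,0)"
    proof -
      have "(adj X * A * X) $$ (0,0) = (\<Sum>t<n. (adj X * A) $$ (0,t) * X $$ (t,0))"
        using X assms by (intro mult_entry[of _ 1 n _ 1]) auto
      also have "\<dots> = (\<Sum>t<n. (\<Sum>u<n. cnj (X $$ (u,0)) * A $$ (u,t)) * X $$ (t,0))"
      proof (rule sum.cong[OF refl])
        fix t assume t: "t \<in> {..<n}"
        have "(adj X * A) $$ (0,t) = (\<Sum>u<n. adj X $$ (0,u) * A $$ (u,t))"
          using X assms t by (intro mult_entry[of _ 1 n _ n]) auto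
        also have "\<dots> = (\<Sum>u<n. cnj (X $$ (u,0)) * A $$ (u,t))"
          using X by (intro sum.cong) auto
        finally show "(adj X * A) $$ (0,t) * X $$ (t,0) = (\<Sum>u<n. cnj (X $$ (u,0)) * A $$ (u,t)) * X $$ (t,0)" by simp
      qed
      finally show ?thesis by simp
    qed
    also have "\<dots> = 0" using X by simp
    finally have "map_vec cnj ?v \<bullet> (A *\<^sub>v ?v) = 0" .
    hence "?v = 0\<^sub>v n" using assms v unfolding pos_def_def by auto
    hence "X = 0\<^sub>m n 1"
    proof (intro eq_matI)
      fix i k assume h: "col X 0 = 0\<^sub>v n" "i < dim_row (0\<^sub>m n 1 :: complex mat)" "k < dim_col (0\<^sub>m n 1 :: complex mat)"
      have "X $$ (i,0) = col X 0 $ i" using X h(2) by simp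
      also have "\<dots> = 0" using h by simp
      finally show "X $$ (i,k) = 0\<^sub>m n 1 $$ (i,k)" using h X by auto
    qed (use X in auto)
  }
  thus ?thesis using assms unfolding wpd_def pos_def_def by auto
qed


lemma block_divmod: assumes "0 < (q::nat)" "j*q \<le> i" "i < j*q + q"
  shows "i div q = j" "i mod q = i - j*q"
proof -
  obtain r where r: "i = r + j*q" "r < q" using assms by (metis add.commute le_add_diff_inverse nat_add_left_cancel_less)
  show "i div q = j" using r assms by simp
  show "i mod q = i - j*q" using r assms by simp
qed

lemma bcol_split:
  assumes "0 < q" "f j \<in> carrier_mat q q"
  shows "bcol q (j+1) f = bcol q j f @\<^sub>r f j"
proof (rule eq_matI)
  fix i k assume "i < dim_row (bcol q j f @\<^sub>r f j)" "k < dim_col (bcol q j f @\<^sub>r f j)"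
  hence ik: "i < j*q + q" "k < q" using assms by (auto simp: append_rows_def)
  show "bcol q (j+1) f $$ (i,k) = (bcol q j f @\<^sub>r f j) $$ (i,k)"
  proof (cases "i < j*q")
    case True
    thus ?thesis using ik assms by (simp add: append_rows_def bcol_index)
  next
    case False
    note d = block_divmod[OF assms(1) _ ik(1)]
    have "bcol q (j+1) f $$ (i,k) = f j $$ (i - j*q, k)" using ik False d assms by (simp add: bcol_index)
    thus ?thesis using ik False assms by (simp add: append_rows_def)
  qed
qed (use assms in \<open>auto simp: append_rows_def\<close>)

lemma bmat_split:
  assumes "0 < q" "f j j \<in> carrier_mat q q"
  shows "bmat q (j+1) (j+1) f = four_block_mat (bmat q j j f) (bcol q j (\<lambda>l. f l j)) (bmat q 1 j (\<lambda>_ k. f j k)) (f j j)"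
proof (rule eq_matI)
  fix i k assume "i < dim_row (four_block_mat (bmat q j j f) (bcol q j (\<lambda>l. f l j)) (bmat q 1 j (\<lambda>_ k. f j k)) (f j j))"
     "k < dim_col (four_block_mat (bmat q j j f) (bcol q j (\<lambda>l. f l j)) (bmat q 1 j (\<lambda>_ k. f j k)) (f j j))"
  hence ik: "i < j*q + q" "k < j*q + q" using assms by auto
  have i1: "i < (j+1)*q" "k < (j+1)*q" using ik by (auto simp: algebra_simps)
  show "bmat q (j+1) (j+1) f $$ (i,k) = four_block_mat (bmat q j j f) (bcol q j (\<lambda>l. f l j)) (bmat q 1 j (\<lambda>_ k. f j k)) (f j j) $$ (i,k)"
  proof (cases "i < j*q")
    case iT: True
    show ?thesis
    proof (cases "k < j*q")
      case True thus ?thesis using iT ik i1 assms by (simp add: bmat_index)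
    next
      case False
      note d = block_divmod[OF assms(1) _ ik(2)]
      show ?thesis using iT False ik i1 assms d by (simp add: bmat_index bcol_index)
    qed
  next
    case iF: False
    note di = block_divmod[OF assms(1) _ ik(1)]
    show ?thesis
    proof (cases "k < j*q")
      case True
      have "i - j*q < q" using ik iF by auto
      thus ?thesis using iF True ik i1 assms di by (simp add: bmat_index)
    next
      case False
      note d = block_divmod[OF assms(1) _ ik(2)]
      show ?thesis using iF False ik i1 assms d di by (simp add: bmat_index)
    qed
  qed
qed (use assms in \<open>auto simp: algebra_simps\<close>)

lemma adj_bcol:
  assumes "0 < q" "\<And>k. k < j \<Longrightarrow> g k \<in> carrier_mat q q"
  shows "adj (bcol q j g) = bmat q 1 j (\<lambda>_ k. adj (g k))"
proof (rule eq_matI)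
  fix i k assume "i < dim_row (bmat q 1 j (\<lambda>_ k. adj (g k)))" "k < dim_col (bmat q 1 j (\<lambda>_ k. adj (g k)))"
  hence ik: "i < q" "k < j*q" by auto
  have kd: "k div q < j" using ik by (simp add: less_mult_imp_div_less)
  have km: "k mod q < q" using assms by simp
  show "adj (bcol q j g) $$ (i,k) = bmat q 1 j (\<lambda>_ k. adj (g k)) $$ (i,k)"
    using ik assms(2)[OF kd] km by (simp add: bcol_index bmat_index)
qed auto

definition Tl :: "nat \<Rightarrow> nat \<Rightarrow> real \<Rightarrow> complex mat" where
  "Tl q j a = 1\<^sub>m ((j+1)*q) - complex_of_real a \<cdot>\<^sub>m Tm q j"

lemma Tl_carrier[simp]: "Tl q j a \<in> carrier_mat ((j+1)*q) ((j+1)*q)"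
  unfolding Tl_def using Tm_carrier[of q j] by auto

lemma Tl_dims[simp]: "dim_row (Tl q j a) = (j+1)*q" "dim_col (Tl q j a) = (j+1)*q"
  using Tl_carrier[of q j a] by (auto simp del: Tl_carrier)

lemma carrier_mat_iff: "A \<in> carrier_mat n m \<longleftrightarrow> dim_row A = n \<and> dim_col A = m"
  by auto

lemma Tl_index: assumes "0 < q" "i < (j+1)*q" "t < (j+1)*q"
  shows "Tl q j a $$ (i,t) = (if t = i then 1 else 0) - complex_of_real a * (if i = t + q then 1 else 0)"
  unfolding Tl_def using assms Tm_carrier[of q j] by (auto simp: Tm_index)

lemma Tl_invertible: assumes "0 < q" shows "invertible_mat (Tl q j a)"
proof (rule det_invertible[OF Tl_carrier])
  have d: "det (Tl q j a) = prod_list (diag_mat (Tl q j a))"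
    by (rule det_lower_triangular[OF _ Tl_carrier]) (use assms in \<open>auto simp: Tl_index\<close>)
  have e: "diag_mat (Tl q j a) = map (\<lambda>i. 1) [0..<(j+1)*q]"
    unfolding diag_mat_def using assms by (auto simp: Tl_index)
  have p: "\<And>xs. prod_list (map (\<lambda>i. 1::complex) xs) = 1"
    by (induct_tac xs) auto
  show "det (Tl q j a) \<noteq> 0" unfolding d e p by simp
qed

lemma Rm_Tl: assumes "0 < q"
  shows "Rm q j (complex_of_real a) = minv (Tl q j a)"
  unfolding Rm_def Tl_def ..

lemma R_facts: assumes "0 < q"
  shows "Rm q j (complex_of_real a) \<in> carrier_mat ((j+1)*q) ((j+1)*q)"
    "Tl q j a * Rm q j (complex_of_real a) = 1\<^sub>m ((j+1)*q)"
    "Rm q j (complex_of_real a) * Tl q j a = 1\<^sub>m ((j+1)*q)"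
  using minv[OF Tl_invertible[OF assms] Tl_carrier] unfolding Rm_Tl[OF assms] by auto

lemma Tl_mult: assumes "0 < q" "B \<in> carrier_mat ((j+1)*q) p" "i < (j+1)*q" "k < p"
  shows "(Tl q j a * B) $$ (i,k) = B $$ (i,k) - complex_of_real a * (if q \<le> i then B $$ (i-q,k) else 0)"
proof -
  let ?N = "(j+1)*q"
  have "(Tl q j a * B) $$ (i,k) = (\<Sum>t<?N. Tl q j a $$ (i,t) * B $$ (t,k))"
    by (rule mult_entry[OF Tl_carrier assms(2-4)])
  also have "\<dots> = (\<Sum>t<?N. (if t = i then 1 else 0) * B $$ (t,k)
      - complex_of_real a * ((if i = t + q then 1 else 0) * B $$ (t,k)))"
    by (rule sum.cong[OF refl]) (use assms in \<open>simp add: Tl_index left_diff_distrib\<close>)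
  also have "\<dots> = (\<Sum>t<?N. (if t = i then 1 else 0) * B $$ (t,k))
      - complex_of_real a * (\<Sum>t<?N. (if i = t + q then 1 else 0) * B $$ (t,k))"
    by (simp add: sum_subtractf sum_distrib_left)
  also have "\<dots> = B $$ (i,k) - complex_of_real a * (if q \<le> i then B $$ (i-q,k) else 0)"
  proof -
    have "i - q < ?N" using assms by auto
    thus ?thesis using assms by (simp add: sum_delta_l sum_shift_ind)
  qed
  finally show ?thesis .
qed

lemma adjTl_mult: assumes "0 < q" "B \<in> carrier_mat ((j+1)*q) p" "i < (j+1)*q" "k < p"
  shows "(adj (Tl q j a) * B) $$ (i,k) = B $$ (i,k) - complex_of_real a * (if i + q < (j+1)*q then B $$ (i+q,k) else 0)"
proof -
  let ?N = "(j+1)*q"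
  have "(adj (Tl q j a) * B) $$ (i,k) = (\<Sum>t<?N. adj (Tl q j a) $$ (i,t) * B $$ (t,k))"
    by (rule mult_entry[OF adj_carrier[OF Tl_carrier] assms(2-4)])
  also have "\<dots> = (\<Sum>t<?N. (if t = i then 1 else 0) * B $$ (t,k)
      - complex_of_real a * (B $$ (t,k) * (if t = i + q then 1 else 0)))"
    by (rule sum.cong[OF refl]) (use assms in \<open>auto simp add: Tl_index left_diff_distrib\<close>)
  also have "\<dots> = (\<Sum>t<?N. (if t = i then 1 else 0) * B $$ (t,k))
      - complex_of_real a * (\<Sum>t<?N. B $$ (t,k) * (if t = i + q then 1 else 0))"
    by (simp add: sum_subtractf sum_distrib_left)
  also have "\<dots> = B $$ (i,k) - complex_of_real a * (if i + q < (j+1)*q then B $$ (i+q,k) else 0)"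
    using assms by (simp add: sum_delta_l sum_shift_ind2)
  finally show ?thesis .
qed


definition xm :: "nat \<Rightarrow> nat \<Rightarrow> real \<Rightarrow> complex mat" where
  "xm q j a = bcol q (j+1) (\<lambda>l. (complex_of_real a)^l \<cdot>\<^sub>m 1\<^sub>m q)"
definition cK :: "real \<Rightarrow> (nat \<Rightarrow> complex mat) \<Rightarrow> nat \<Rightarrow> complex mat" where
  "cK b s l = complex_of_real b \<cdot>\<^sub>m s l - s (l+1)"
definition cvec :: "nat \<Rightarrow> real \<Rightarrow> (nat \<Rightarrow> complex mat) \<Rightarrow> nat \<Rightarrow> complex mat" where
  "cvec q b s j = bcol q (j+1) (cK b s)"
definition Jp :: "nat \<Rightarrow> nat \<Rightarrow> complex mat" where
  "Jp q j = mat ((j+1)*q) (j*q) (\<lambda>(i,k). if i = k + q then 1 else 0)"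
definition Jm :: "nat \<Rightarrow> nat \<Rightarrow> complex mat" where
  "Jm q j = Sel ((j+1)*q) (j*q)"

lemma xm_carrier[simp]: "xm q j a \<in> carrier_mat ((j+1)*q) q" unfolding xm_def by (rule bcol_carrier)
lemma xm_dims[simp]: "dim_row (xm q j a) = (j+1)*q" "dim_col (xm q j a) = q" unfolding xm_def by auto
lemma cvec_carrier[simp]: "cvec q b s j \<in> carrier_mat ((j+1)*q) q" unfolding cvec_def by (rule bcol_carrier)
lemma cvec_dims[simp]: "dim_row (cvec q b s j) = (j+1)*q" "dim_col (cvec q b s j) = q" unfolding cvec_def by auto
lemma Jp_carrier[simp]: "Jp q j \<in> carrier_mat ((j+1)*q) (j*q)" unfolding Jp_def by simp
lemma Jp_dims[simp]: "dim_row (Jp q j) = (j+1)*q" "dim_col (Jp q j) = j*q" unfolding Jp_def by auto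
lemma Jm_carrier[simp]: "Jm q j \<in> carrier_mat ((j+1)*q) (j*q)" unfolding Jm_def by simp
lemma Jm_dims[simp]: "dim_row (Jm q j) = (j+1)*q" "dim_col (Jm q j) = j*q" unfolding Jm_def by auto
lemma vv_dims[simp]: "dim_row (vv q j) = (j+1)*q" "dim_col (vv q j) = q"
  using vv_carrier[of q j] by (auto simp del: vv_carrier)
lemma Tm_dims[simp]: "dim_row (Tm q j) = (j+1)*q" "dim_col (Tm q j) = (j+1)*q"
  using Tm_carrier[of q j] by (auto simp del: Tm_carrier)

lemma K1_hankel: "K1 q b s j = bmat q (j+1) (j+1) (\<lambda>l k. cK b s (l+k))"
  unfolding K1_def cK_def by simp
lemma H2_hankel: "H2 q a b s j = bmat q (j+1) (j+1) (\<lambda>l k. shat a b s (l+k))"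
  unfolding H2_def by simp

lemma I1: assumes "0 < q" shows "Tl q j a * xm q j a = vv q j"
proof (rule eq_matI)
  fix i k assume "i < dim_row (vv q j)" "k < dim_col (vv q j)"
  hence ik: "i < (j+1)*q" "k < q" by auto
  have xe: "\<And>i. i < (j+1)*q \<Longrightarrow> xm q j a $$ (i,k) = complex_of_real a ^ (i div q) * (if i mod q = k then 1 else 0)"
    unfolding xm_def using ik assms by (simp add: bcol_index)
  have "(Tl q j a * xm q j a) $$ (i,k) = xm q j a $$ (i,k) - complex_of_real a * (if q \<le> i then xm q j a $$ (i-q,k) else 0)"
    by (rule Tl_mult[OF assms xm_carrier ik])
  also have "\<dots> = vv q j $$ (i,k)"
  proof (cases "q \<le> i")
    case True
    have d: "i div q = Suc ((i-q) div q)" "i mod q = (i-q) mod q"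
      using True assms by (simp_all add: le_div_geq le_mod_geq)
    have "i - q < (j+1)*q" using ik by auto
    hence "xm q j a $$ (i,k) - complex_of_real a * (if q \<le> i then xm q j a $$ (i-q,k) else 0) = 0"
      using True ik d by (simp add: xe)
    thus ?thesis using True ik assms by (simp add: vv_index)
  next
    case False
    thus ?thesis using ik assms by (simp add: xe vv_index)
  qed
  finally show "(Tl q j a * xm q j a) $$ (i,k) = vv q j $$ (i,k)" .
qed auto

lemma I3: assumes "0 < q" shows "adj (Tl q j a) * vv q j = vv q j"
proof (rule eq_matI)
  fix i k assume "i < dim_row (vv q j)" "k < dim_col (vv q j)"
  hence ik: "i < (j+1)*q" "k < q" by auto
  have "(adj (Tl q j a) * vv q j) $$ (i,k) = vv q j $$ (i,k) - complex_of_real a * (if i + q < (j+1)*q then vv q j $$ (i+q,k) else 0)"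
    by (rule adjTl_mult[OF assms vv_carrier ik])
  also have "\<dots> = vv q j $$ (i,k)" using ik assms by (simp add: vv_index)
  finally show "(adj (Tl q j a) * vv q j) $$ (i,k) = vv q j $$ (i,k)" .
qed auto

lemma bmat_vv: assumes "0 < q"
  shows "bmat q (j+1) (j+1) f * vv q j = bcol q (j+1) (\<lambda>l. f l 0)"
proof (rule eq_matI)
  fix i k assume "i < dim_row (bcol q (j+1) (\<lambda>l. f l 0))" "k < dim_col (bcol q (j+1) (\<lambda>l. f l 0))"
  hence ik: "i < (j+1)*q" "k < q" by auto
  have "(bmat q (j+1) (j+1) f * vv q j) $$ (i,k) = (\<Sum>t<(j+1)*q. bmat q (j+1) (j+1) f $$ (i,t) * vv q j $$ (t,k))"
    by (rule mult_entry[OF bmat_carrier vv_carrier ik])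
  also have "\<dots> = (\<Sum>t<(j+1)*q. bmat q (j+1) (j+1) f $$ (i,t) * (if t = k then 1 else 0))"
    by (rule sum.cong[OF refl]) (use assms ik in \<open>auto simp: vv_index\<close>)
  also have "\<dots> = bmat q (j+1) (j+1) f $$ (i,k)"
    by (rule sum_delta_r) (use ik in auto)
  also have "\<dots> = bcol q (j+1) (\<lambda>l. f l 0) $$ (i,k)"
  proof -
    have "k < (j+1)*q" using ik by (auto intro: less_le_trans)
    thus ?thesis using ik assms by (simp add: bmat_index bcol_index)
  qed
  finally show "(bmat q (j+1) (j+1) f * vv q j) $$ (i,k) = bcol q (j+1) (\<lambda>l. f l 0) $$ (i,k)" .
qed auto

lemma K1_vv: assumes "0 < q" shows "K1 q b s j * vv q j = cvec q b s j"
  unfolding K1_hankel cvec_def using bmat_vv[OF assms, of j "\<lambda>l k. cK b s (l+k)"] by simp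


lemma cK_index: "s l \<in> carrier_mat q q \<Longrightarrow> s (l+1) \<in> carrier_mat q q \<Longrightarrow> r < q \<Longrightarrow> k < q \<Longrightarrow>
  cK b s l $$ (r,k) = complex_of_real b * s l $$ (r,k) - s (l+1) $$ (r,k)"
  unfolding cK_def by auto

lemma shat_index: "s l \<in> carrier_mat q q \<Longrightarrow> s (l+1) \<in> carrier_mat q q \<Longrightarrow> s (l+2) \<in> carrier_mat q q \<Longrightarrow> r < q \<Longrightarrow> k < q \<Longrightarrow>
  shat a b s l $$ (r,k) = - (complex_of_real a * complex_of_real b) * s l $$ (r,k)
     + (complex_of_real a + complex_of_real b) * s (l+1) $$ (r,k) - s (l+2) $$ (r,k)"
  unfolding shat_def by auto

lemma u20_index: "s 0 \<in> carrier_mat q q \<Longrightarrow> s 1 \<in> carrier_mat q q \<Longrightarrow> r < q \<Longrightarrow> k < q \<Longrightarrow>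
  u20 a b s $$ (r,k) = - ((complex_of_real a + complex_of_real b) * s 0 $$ (r,k)) + s 1 $$ (r,k)"
  unfolding u20_def by auto

lemma vv_s0_index: assumes "0 < q" "s 0 \<in> carrier_mat q q" "i < (j+1)*q" "k < q"
  shows "(vv q j * s 0) $$ (i,k) = (if i < q then s 0 $$ (i,k) else 0)"
proof -
  have "(vv q j * s 0) $$ (i,k) = (\<Sum>t<q. vv q j $$ (i,t) * s 0 $$ (t,k))"
    by (rule mult_entry[OF vv_carrier assms(2) assms(3,4)])
  also have "\<dots> = (\<Sum>t<q. (if t = i then 1 else 0) * s 0 $$ (t,k))"
    by (rule sum.cong[OF refl]) (use assms in \<open>auto simp: vv_index\<close>)
  also have "\<dots> = (if i < q then s 0 $$ (i,k) else 0)"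
    by (cases "i < q") (auto simp: sum_delta_l)
  finally show ?thesis .
qed

lemma I2: assumes q: "0 < q" and s: "\<And>l. l \<le> j+1 \<Longrightarrow> s l \<in> carrier_mat q q"
  shows "Tl q j a * cvec q b s j = - (u2 q a b s j + complex_of_real a \<cdot>\<^sub>m (vv q j * s 0))"
proof (rule eq_matI)
  fix i k assume "i < dim_row (- (u2 q a b s j + complex_of_real a \<cdot>\<^sub>m (vv q j * s 0)))"
    "k < dim_col (- (u2 q a b s j + complex_of_real a \<cdot>\<^sub>m (vv q j * s 0)))"
  hence ik: "i < (j+1)*q" "k < q" using s[of 0] by (auto simp: u2_def)
  have ld: "i div q \<le> j" using ik q by (metis less_mult_imp_div_less add.commute less_Suc_eq_le plus_1_eq_Suc)
  have rm: "i mod q < q" using q by simp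
  have ce: "\<And>ii. ii < (j+1)*q \<Longrightarrow> cvec q b s j $$ (ii,k) = complex_of_real b * s (ii div q) $$ (ii mod q,k) - s (ii div q + 1) $$ (ii mod q, k)"
  proof -
    fix ii assume i: "ii < (j+1)*q"
    have ld: "ii div q + 1 \<le> j + 1" using i q by (metis less_mult_imp_div_less add.commute less_Suc_eq_le plus_1_eq_Suc add_le_cancel_right)
    have "cvec q b s j $$ (ii,k) = cK b s (ii div q) $$ (ii mod q, k)"
      unfolding cvec_def using i ik by (simp add: bcol_index)
    also have "\<dots> = complex_of_real b * s (ii div q) $$ (ii mod q,k) - s (ii div q + 1) $$ (ii mod q, k)"
      by (rule cK_index) (use s ld q ik in auto)
    finally show "cvec q b s j $$ (ii,k) = complex_of_real b * s (ii div q) $$ (ii mod q,k) - s (ii div q + 1) $$ (ii mod q, k)" .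
  qed
  have u2c: "u2 q a b s j \<in> carrier_mat ((j+1)*q) q" unfolding u2_def by (rule bcol_carrier)
  have vsc: "vv q j * s 0 \<in> carrier_mat ((j+1)*q) q" using s[of 0] by auto
  have e: "(- (u2 q a b s j + complex_of_real a \<cdot>\<^sub>m (vv q j * s 0))) $$ (i,k)
     = - (u2 q a b s j $$ (i,k) + complex_of_real a * (vv q j * s 0) $$ (i,k))"
    using u2c vsc ik s[of 0] by (simp add: carrier_matD)
  have "(Tl q j a * cvec q b s j) $$ (i,k) = cvec q b s j $$ (i,k) - complex_of_real a * (if q \<le> i then cvec q b s j $$ (i-q,k) else 0)"
    by (rule Tl_mult[OF q cvec_carrier ik])
  also have "\<dots> = (- (u2 q a b s j + complex_of_real a \<cdot>\<^sub>m (vv q j * s 0))) $$ (i,k)"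
  proof (cases "q \<le> i")
    case True
    define d where "d = (i-q) div q"
    have d: "i div q = Suc d" "i mod q = (i-q) mod q"
      using True q by (simp_all add: le_div_geq le_mod_geq d_def)
    have iq: "i - q < (j+1)*q" using ik by auto
    have dj: "d + 2 \<le> j + 1" using ld d by simp
    have sd: "s d \<in> carrier_mat q q" "s (d+1) \<in> carrier_mat q q" "s (d+2) \<in> carrier_mat q q"
      using s dj by auto
    have sh: "shat a b s d \<in> carrier_mat q q" using sd by (simp add: shat_def minus_carrier_mat)
    have u: "u2 q a b s j $$ (i,k) = - shat a b s d $$ (i mod q, k)"
      unfolding u2_def using ik q d sd rm sh by (simp add: bcol_index)
    show ?thesis unfolding e using True ik iq q d u sd rm
      by (simp add: ce vv_s0_index s d_def[symmetric] shat_index algebra_simps numeral_2_eq_2)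
  next
    case False
    have u: "u2 q a b s j $$ (i,k) = u20 a b s $$ (i, k)"
      unfolding u2_def using ik q False by (simp add: bcol_index)
    have u0: "u20 a b s $$ (i, k) = - ((complex_of_real a + complex_of_real b) * s 0 $$ (i,k)) + s 1 $$ (i,k)"
      by (rule u20_index) (use s[of 0] s[of 1] False ik in auto)
    show ?thesis unfolding e using False ik q u s[of 0] s[of 1]
      by (simp add: ce vv_s0_index s u0 algebra_simps)
  qed
  finally show "(Tl q j a * cvec q b s j) $$ (i,k) = (- (u2 q a b s j + complex_of_real a \<cdot>\<^sub>m (vv q j * s 0))) $$ (i,k)" .
qed (use s[of 0] in \<open>auto simp: u2_def\<close>)


lemma adjTl_Jp: assumes "0 < q"
  shows "adj (Tl q j a) * Jp q j = mat ((j+1)*q) (j*q) (\<lambda>(t,k). (if t = k + q then 1 else 0) - complex_of_real a * (if t = k then 1 else 0))"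
proof (rule eq_matI)
  fix t k assume "t < dim_row (mat ((j+1)*q) (j*q) (\<lambda>(t,k). (if t = k + q then 1 else 0) - complex_of_real a * (if t = k then 1 else (0::complex))))"
    "k < dim_col (mat ((j+1)*q) (j*q) (\<lambda>(t,k). (if t = k + q then 1 else 0) - complex_of_real a * (if t = k then 1 else (0::complex))))"
  hence tk: "t < (j+1)*q" "k < j*q" by auto
  have "(adj (Tl q j a) * Jp q j) $$ (t,k) = Jp q j $$ (t,k) - complex_of_real a * (if t + q < (j+1)*q then Jp q j $$ (t+q,k) else 0)"
    by (rule adjTl_mult[OF assms Jp_carrier tk])
  also have "\<dots> = (if t = k + q then 1 else 0) - complex_of_real a * (if t = k then 1 else 0)"
    using tk by (auto simp: Jp_def)
  finally show "(adj (Tl q j a) * Jp q j) $$ (t,k) = mat ((j+1)*q) (j*q) (\<lambda>(t,k). (if t = k + q then 1 else 0) - complex_of_real a * (if t = k then 1 else (0::complex))) $$ (t,k)"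
    using tk by simp
qed auto

lemma I5: assumes q: "0 < q" and s: "\<And>l. l \<le> 2*j+1 \<Longrightarrow> s l \<in> carrier_mat q q"
  shows "K1 q b s j * (adj (Tl q j a) * Jp q j) = H2 q a b s j * Jm q j"
proof (rule eq_matI)
  let ?N = "(j+1)*q"
  fix i k assume "i < dim_row (H2 q a b s j * Jm q j)" "k < dim_col (H2 q a b s j * Jm q j)"
  hence ik: "i < ?N" "k < j*q" by (auto simp: H2_def)
  have kN: "k < ?N" "k + q < ?N" using ik by auto
  define l where "l = i div q"
  define m where "m = k div q"
  have lm: "l \<le> j" "m < j" using ik q unfolding l_def m_def
    by (metis less_mult_imp_div_less add.commute less_Suc_eq_le plus_1_eq_Suc, simp add: less_mult_imp_div_less)
  have sl: "s (l+m) \<in> carrier_mat q q" "s (l+m+1) \<in> carrier_mat q q" "s (l+m+2) \<in> carrier_mat q q"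
    using s lm by auto
  have r: "i mod q < q" "k mod q < q" using q by auto
  let ?B = "mat ((j+1)*q) (j*q) (\<lambda>(t,k). (if t = k + q then 1 else 0) - complex_of_real a * (if t = k then 1 else (0::complex)))"
  have "(K1 q b s j * (adj (Tl q j a) * Jp q j)) $$ (i,k) = (K1 q b s j * ?B) $$ (i,k)"
    unfolding adjTl_Jp[OF q] ..
  also have "\<dots> = (\<Sum>t<?N. K1 q b s j $$ (i,t) * ?B $$ (t,k))"
    by (rule mult_entry[of _ ?N ?N _ "j*q"]) (use ik in \<open>auto simp: K1_def\<close>)
  also have "\<dots> = (\<Sum>t<?N. K1 q b s j $$ (i,t) * (if t = k + q then 1 else 0))
      - complex_of_real a * (\<Sum>t<?N. K1 q b s j $$ (i,t) * (if t = k then 1 else 0))"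
    by (simp add: sum_subtractf sum_distrib_left right_diff_distrib ac_simps ik)
  also have "\<dots> = K1 q b s j $$ (i,k+q) - complex_of_real a * K1 q b s j $$ (i,k)"
    using kN by (simp add: sum_delta_r)
  also have "\<dots> = cK b s (l+m+1) $$ (i mod q, k mod q) - complex_of_real a * cK b s (l+m) $$ (i mod q, k mod q)"
    unfolding K1_hankel using ik kN q by (simp add: bmat_index l_def m_def)
  also have "\<dots> = shat a b s (l+m) $$ (i mod q, k mod q)"
    using sl r by (simp add: cK_index shat_index algebra_simps numeral_2_eq_2)
  also have "\<dots> = H2 q a b s j $$ (i,k)"
    unfolding H2_hankel using ik kN q by (simp add: bmat_index l_def m_def)
  also have "\<dots> = (H2 q a b s j * Jm q j) $$ (i,k)"
    unfolding Jm_def by (rule Sel_right[symmetric]) (use ik in \<open>auto simp: H2_def\<close>)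
  finally show "(K1 q b s j * (adj (Tl q j a) * Jp q j)) $$ (i,k) = (H2 q a b s j * Jm q j) $$ (i,k)" .
qed (auto simp: H2_def K1_def)


lemma ut1_carrier[simp]: "ut1 q b s j \<in> carrier_mat ((j+1)*q) q" unfolding ut1_def by (rule bcol_carrier)
lemma ut1_dims[simp]: "dim_row (ut1 q b s j) = (j+1)*q" "dim_col (ut1 q b s j) = q" unfolding ut1_def by auto
lemma u2_carrier[simp]: "u2 q a b s j \<in> carrier_mat ((j+1)*q) q" unfolding u2_def by (rule bcol_carrier)
lemma u2_dims[simp]: "dim_row (u2 q a b s j) = (j+1)*q" "dim_col (u2 q a b s j) = q" unfolding u2_def by auto

lemma adjJp_mult: assumes "B \<in> carrier_mat ((j+1)*q) p" "i < j*q" "k < p"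
  shows "(adj (Jp q j) * B) $$ (i,k) = B $$ (i+q,k)"
proof -
  have "(adj (Jp q j) * B) $$ (i,k) = (\<Sum>t<(j+1)*q. adj (Jp q j) $$ (i,t) * B $$ (t,k))"
    by (rule mult_entry[of _ "j*q" "(j+1)*q" _ p]) (use assms in auto)
  also have "\<dots> = (\<Sum>t<(j+1)*q. (if t = i + q then 1 else 0) * B $$ (t,k))"
    by (rule sum.cong[OF refl]) (use assms in \<open>auto simp: Jp_def\<close>)
  also have "\<dots> = B $$ (i+q,k)" by (rule sum_delta_l) (use assms in auto)
  finally show ?thesis .
qed

lemma I4: assumes q: "0 < q" and s: "\<And>l. l \<le> j \<Longrightarrow> s l \<in> carrier_mat q q"
  shows "adj (Jp q j) * ut1 q b s j = - (adj (Jm q j) * cvec q b s j)"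
proof (rule eq_matI)
  fix i k assume "i < dim_row (- (adj (Jm q j) * cvec q b s j))" "k < dim_col (- (adj (Jm q j) * cvec q b s j))"
  hence ik: "i < j*q" "k < q" by auto
  define l where "l = i div q"
  have lj: "l < j" using ik q unfolding l_def by (simp add: less_mult_imp_div_less)
  have iN: "i + q < (j+1)*q" "i < (j+1)*q" using ik by auto
  have r: "i mod q < q" using q by auto
  have d: "(i+q) div q = l + 1" "(i+q) mod q = i mod q" using q by (auto simp: l_def)
  have sl: "s l \<in> carrier_mat q q" "s (l+1) \<in> carrier_mat q q" using s lj by auto
  have "(adj (Jp q j) * ut1 q b s j) $$ (i,k) = ut1 q b s j $$ (i+q,k)"
    by (rule adjJp_mult[OF ut1_carrier ik])
  also have "\<dots> = s (l+1) $$ (i mod q, k) - complex_of_real b * s l $$ (i mod q, k)"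
    unfolding ut1_def using iN ik d sl r by (simp add: bcol_index)
  also have "\<dots> = - (cvec q b s j $$ (i,k))"
    unfolding cvec_def using iN ik sl r by (simp add: bcol_index cK_index l_def)
  also have "cvec q b s j $$ (i,k) = (adj (Jm q j) * cvec q b s j) $$ (i,k)"
    unfolding Jm_def by (rule Sel_left[symmetric]) (use ik in auto)
  finally show "(adj (Jp q j) * ut1 q b s j) $$ (i,k) = (- (adj (Jm q j) * cvec q b s j)) $$ (i,k)"
    using ik by simp
qed auto

lemma I7: assumes q: "0 < q"
  shows "vv q j * adj (vv q j) + Jp q j * adj (Jp q j) = 1\<^sub>m ((j+1)*q)"
proof (rule eq_matI)
  let ?N = "(j+1)*q"
  fix i t assume "i < dim_row (1\<^sub>m ?N :: complex mat)" "t < dim_col (1\<^sub>m ?N :: complex mat)"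
  hence it: "i < ?N" "t < ?N" by auto
  have e1: "(vv q j * adj (vv q j)) $$ (i,t) = (\<Sum>k<q. (if k = i then 1 else 0) * (if t = k then 1 else 0))"
    by (subst mult_entry[of _ ?N q _ ?N]) (use it q in \<open>auto simp: vv_index intro!: sum.cong\<close>)
  have e2: "(Jp q j * adj (Jp q j)) $$ (i,t) = (\<Sum>k<j*q. (if i = k + q then 1 else 0) * (if t = k + q then 1 else 0))"
    by (subst mult_entry[of _ ?N "j*q" _ ?N]) (use it q in \<open>auto simp: Jp_def intro!: sum.cong\<close>)
  show "(vv q j * adj (vv q j) + Jp q j * adj (Jp q j)) $$ (i,t) = 1\<^sub>m ?N $$ (i,t)"
  proof (cases "i < q")
    case True
    have "(\<Sum>k<j*q. (if i = k + q then 1 else 0) * (if t = k + q then 1 else (0::complex))) = 0"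
      using True by (intro sum.neutral) auto
    moreover have "(\<Sum>k<q. (if k = i then 1 else 0) * (if t = k then 1 else (0::complex))) = (if t = i then 1 else 0)"
      using True by (subst sum_delta_l) auto
    ultimately show ?thesis using it e1 e2 by auto
  next
    case False
    have "(\<Sum>k<q. (if k = i then 1 else 0) * (if t = k then 1 else (0::complex))) = 0"
      using False by (intro sum.neutral) auto
    moreover have "(\<Sum>k<j*q. (if i = k + q then 1 else 0) * (if t = k + q then 1 else (0::complex))) = (if t = i then 1 else 0)"
    proof -
      have "(\<Sum>k<j*q. (if i = k + q then 1 else 0) * (if t = k + q then 1 else (0::complex)))
          = (\<Sum>k<j*q. (if k = i - q then 1 else 0) * (if t = k + q then 1 else (0::complex)))"
        using False by (intro sum.cong) auto
      also have "\<dots> = (if t = i - q + q then 1 else 0)" using False it by (subst sum_delta_l) auto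
      finally show ?thesis using False by simp
    qed
    ultimately show ?thesis using it e1 e2 by auto
  qed
qed auto

lemma I9: assumes q: "0 < q" and s0: "s 0 \<in> carrier_mat q q"
  shows "adj (vv q j) * ut1 q b s j = s 0"
proof (rule eq_matI)
  fix i k assume "i < dim_row (s 0)" "k < dim_col (s 0)"
  hence ik: "i < q" "k < q" using s0 by auto
  have "(adj (vv q j) * ut1 q b s j) $$ (i,k) = (\<Sum>t<(j+1)*q. (if t = i then 1 else 0) * ut1 q b s j $$ (t,k))"
    by (subst mult_entry[of _ q "(j+1)*q" _ q]) (use ik q in \<open>auto simp: vv_index intro!: sum.cong\<close>)
  also have "\<dots> = ut1 q b s j $$ (i,k)" by (rule sum_delta_l) (use ik in auto)
  also have "\<dots> = s 0 $$ (i,k)" unfolding ut1_def using ik by (simp add: bcol_index)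
  finally show "(adj (vv q j) * ut1 q b s j) $$ (i,k) = s 0 $$ (i,k)" .
qed (use s0 in auto)

lemma J1: "Jm q j = 1\<^sub>m (j*q) @\<^sub>r 0\<^sub>m q (j*q)"
  unfolding Jm_def Sel_def append_rows_def by (rule eq_matI) auto


lemma zero_rows: "X \<in> carrier_mat 0 k \<Longrightarrow> X = 0\<^sub>m 0 k"
  by (rule eq_matI) auto

lemma append_rows_fb: "A \<in> carrier_mat m r \<Longrightarrow> B \<in> carrier_mat p r \<Longrightarrow>
   A @\<^sub>r B = four_block_mat A (0\<^sub>m m 0) B (0\<^sub>m p 0)"
  unfolding append_rows_def by auto

lemma rowcat_fb: "A \<in> carrier_mat q m \<Longrightarrow> B \<in> carrier_mat q p \<Longrightarrow>
   rowcat A B = four_block_mat A B (0\<^sub>m 0 m) (0\<^sub>m 0 p)"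
  unfolding rowcat_def by auto

lemma fb_mult_append:
  assumes "A \<in> carrier_mat nr1 n1" "B \<in> carrier_mat nr1 n2" "C \<in> carrier_mat nr2 n1" "D \<in> carrier_mat nr2 n2"
    "X \<in> carrier_mat n1 k" "Y \<in> carrier_mat n2 k"
  shows "four_block_mat A B C D * (X @\<^sub>r Y) = (A * X + B * Y) @\<^sub>r (C * X + D * Y)"
proof -
  have "four_block_mat A B C D * (X @\<^sub>r Y) = four_block_mat A B C D * four_block_mat X (0\<^sub>m n1 0) Y (0\<^sub>m n2 0)"
    using assms by (simp add: append_rows_fb)
  also have "\<dots> = four_block_mat (A * X + B * Y) (A * 0\<^sub>m n1 0 + B * 0\<^sub>m n2 0) (C * X + D * Y) (C * 0\<^sub>m n1 0 + D * 0\<^sub>m n2 0)"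
    by (rule mult_four_block_mat) (use assms in auto)
  also have "\<dots> = (A * X + B * Y) @\<^sub>r (C * X + D * Y)"
    unfolding append_rows_def by (rule eq_matI) (use assms in auto)
  finally show ?thesis .
qed

lemma adj_append_rows:
  assumes "A \<in> carrier_mat m r" "B \<in> carrier_mat p r"
  shows "adj (A @\<^sub>r B) = rowcat (adj A) (adj B)"
proof -
  have "adj (A @\<^sub>r B) = adj (four_block_mat A (0\<^sub>m m 0) B (0\<^sub>m p 0))"
    using assms by (simp add: append_rows_fb)
  also have "\<dots> = four_block_mat (adj A) (adj B) (adj (0\<^sub>m m 0)) (adj (0\<^sub>m p 0))"
    by (rule adj_four_block) (use assms in auto)
  also have "\<dots> = rowcat (adj A) (adj B)" unfolding rowcat_def using assms by auto
  finally show ?thesis .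
qed

lemma append_rows_zero: "0\<^sub>m m k @\<^sub>r 0\<^sub>m p k = (0\<^sub>m (m+p) k :: complex mat)"
  unfolding append_rows_def by (rule eq_matI) auto

lemma schur_gen:
  fixes A Y kap :: "complex mat"
  assumes A: "A \<in> carrier_mat n n" and Y: "Y \<in> carrier_mat n q" and kap: "kap \<in> carrier_mat q q" "adj kap = kap"
    and WM: "wpd (n+q) (four_block_mat A Y (adj Y) kap)" and WA: "wpd n A"
  defines "M \<equiv> four_block_mat A Y (adj Y) kap"
    and "S \<equiv> kap - adj Y * minv A * Y"
    and "L \<equiv> rowcat (- (adj Y * minv A)) (1\<^sub>m q)"
  shows "L * M = rowcat (0\<^sub>m q n) S"
    and "S \<in> carrier_mat q q" "adj S = S" "invertible_mat S"
    and "L \<in> carrier_mat q (n+q)"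
    and "rowcat (0\<^sub>m q n) (1\<^sub>m q) * adj L = 1\<^sub>m q"
    and "\<And>z1 z2 p. z1 \<in> carrier_mat n p \<Longrightarrow> z2 \<in> carrier_mat q p \<Longrightarrow>
          adj (z1 @\<^sub>r z2) * minv M * (z1 @\<^sub>r z2) = adj z1 * minv A * z1 + adj (L * (z1 @\<^sub>r z2)) * minv S * (L * (z1 @\<^sub>r z2))"
proof -
  have Ainv: "invertible_mat A" using wpd_inv[OF WA] .
  note Ai = minv[OF Ainv A]
  have Aih: "adj (minv A) = minv A" using minv_adj[OF Ainv A] WA unfolding wpd_def by auto
  have Ah: "adj A = A" using WA unfolding wpd_def by auto
  define P where "P = - (adj Y * minv A)"
  have Pc: "P \<in> carrier_mat q n" unfolding P_def using Ai Y by (auto intro: uminus_carrier_mat)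
  have LP: "L = rowcat P (1\<^sub>m q)" unfolding L_def P_def ..
  have Mc: "M \<in> carrier_mat (n+q) (n+q)" unfolding M_def using A Y kap by auto
  have Mh: "adj M = M" unfolding M_def using A Y kap Ah by (simp add: adj_four_block[of A n n Y q "adj Y" q kap])
  have Minv: "invertible_mat M" using wpd_inv[OF WM] unfolding M_def .
  have Xc: "adj Y * minv A * Y \<in> carrier_mat q q" using Y Ai by auto
  show Sc: "S \<in> carrier_mat q q" unfolding S_def using Xc by (rule minus_carrier_mat)
  show Lc: "L \<in> carrier_mat q (n+q)" unfolding LP using Pc by auto
  show LM: "L * M = rowcat (0\<^sub>m q n) S"
  proof -
    have "L * M = four_block_mat P (1\<^sub>m q) (0\<^sub>m 0 n) (0\<^sub>m 0 q) * four_block_mat A Y (adj Y) kap"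
      unfolding LP M_def using rowcat_fb[OF Pc one_carrier_mat] by simp
    also have "\<dots> = four_block_mat (P * A + 1\<^sub>m q * adj Y) (P * Y + 1\<^sub>m q * kap)
        (0\<^sub>m 0 n * A + 0\<^sub>m 0 q * adj Y) (0\<^sub>m 0 n * Y + 0\<^sub>m 0 q * kap)"
      by (rule mult_four_block_mat) (use Pc A Y kap in auto)
    also have "P * A + 1\<^sub>m q * adj Y = 0\<^sub>m q n"
    proof -
      have "P * A = - (adj Y * (minv A * A))" unfolding P_def using Y Ai A
        by (simp add: assoc_dims carrier_matD)
      also have "\<dots> = - adj Y" using Ai Y by simp
      finally show ?thesis using Y by simp
    qed
    also have "P * Y + 1\<^sub>m q * kap = S"
    proof -
      have "P * Y = - (adj Y * minv A * Y)" unfolding P_def using Y Ai by (simp add: carrier_matD)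
      thus ?thesis unfolding S_def using Xc kap
        by (simp add: add_uminus_minus_mat[symmetric] comm_add_mat[of _ q q])
    qed
    also have "0\<^sub>m 0 n * A + 0\<^sub>m 0 q * adj Y = 0\<^sub>m 0 n" by (rule zero_rows) (use A Y in auto)
    also have "0\<^sub>m 0 n * Y + 0\<^sub>m 0 q * kap = 0\<^sub>m 0 q" by (rule zero_rows) (use Y kap in auto)
    finally show ?thesis using rowcat_fb[OF zero_carrier_mat Sc] by simp
  qed
  show Sh: "adj S = S"
  proof -
    have "adj (adj Y * minv A * Y) = adj Y * adj (adj Y * minv A)"
      by (rule adj_mult) (use Y Ai in auto)
    also have "adj (adj Y * minv A) = adj (minv A) * adj (adj Y)"
      by (rule adj_mult) (use Y Ai in auto)
    finally have "adj (adj Y * minv A * Y) = adj Y * minv A * Y"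
      using Aih Y Ai by (simp add: assoc_dims carrier_matD)
    thus ?thesis unfolding S_def using Xc kap Aih by (simp add: adj_minus[of _ q q])
  qed
  have MadjL: "M * adj L = 0\<^sub>m n q @\<^sub>r S"
  proof -
    have "M * adj L = adj (L * M)" using adj_mult[OF Lc Mc] Mh by simp
    also have "\<dots> = 0\<^sub>m n q @\<^sub>r adj S" unfolding LM using adj_rowcat[OF zero_carrier_mat Sc] by simp
    finally show ?thesis using Sh by simp
  qed
  have adjL: "adj L = adj P @\<^sub>r 1\<^sub>m q" unfolding LP using adj_rowcat[OF Pc one_carrier_mat] by simp
  have adjPc: "adj P \<in> carrier_mat n q" using Pc by simp
  show R1: "rowcat (0\<^sub>m q n) (1\<^sub>m q) * adj L = 1\<^sub>m q"
    unfolding adjL using rowcat_mult_append[OF zero_carrier_mat one_carrier_mat adjPc one_carrier_mat] left_mult_zero_mat[OF adjPc, of q] by simp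
  have adjLc: "adj L \<in> carrier_mat (n+q) q" using Lc by simp
  show Sinv: "invertible_mat S"
  proof (rule inv_crit[OF Sc])
    fix X assume X: "X \<in> carrier_mat q 1" "S * X = 0\<^sub>m q 1"
    have "M * (adj L * X) = (M * adj L) * X" using Mc adjLc X by (simp add: assoc_dims carrier_matD)
    also have "\<dots> = (0\<^sub>m n q * X) @\<^sub>r (S * X)" unfolding MadjL by (rule append_rows_mult) (use Sc X in auto)
    also have "\<dots> = 0\<^sub>m (n+q) 1" using X append_rows_zero[of n 1 q] by simp
    finally have aLX: "adj L * X = 0\<^sub>m (n+q) 1" using invertible_kernel[OF Minv Mc, of "adj L * X" 1] adjLc X by auto
    hence "rowcat (0\<^sub>m q n) (1\<^sub>m q) * (adj L * X) = 0\<^sub>m q 1"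
    proof -
      have "rowcat (0\<^sub>m q n) (1\<^sub>m q) \<in> carrier_mat q (n+q)" by (rule carrier_rowcat) auto
      from right_mult_zero_mat[OF this, of 1] show ?thesis using aLX by simp
    qed
    moreover have "rowcat (0\<^sub>m q n) (1\<^sub>m q) * (adj L * X) = X"
    proof -
      have "rowcat (0\<^sub>m q n) (1\<^sub>m q) * (adj L * X) = (rowcat (0\<^sub>m q n) (1\<^sub>m q) * adj L) * X"
        by (rule assoc_mult_mat[symmetric, of _ q "n+q" _ q _ 1]) (use adjLc X in auto)
      thus ?thesis using R1 X by simp
    qed
    ultimately show "X = 0\<^sub>m q 1" by simp
  qed
  note Si = minv[OF Sinv Sc]
  define G where "G = four_block_mat (minv A) (0\<^sub>m n q) (0\<^sub>m q n) (0\<^sub>m q q) + adj L * minv S * L"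
  have MG: "M * G = 1\<^sub>m (n+q)"
  proof -
    have FBc: "four_block_mat (minv A) (0\<^sub>m n q) (0\<^sub>m q n) (0\<^sub>m q q) \<in> carrier_mat (n+q) (n+q)" using Ai by auto
    have c2: "adj L * minv S * L \<in> carrier_mat (n+q) (n+q)" using adjLc Si Lc by auto
    have e1: "M * four_block_mat (minv A) (0\<^sub>m n q) (0\<^sub>m q n) (0\<^sub>m q q) = four_block_mat (1\<^sub>m n) (0\<^sub>m n q) (adj Y * minv A) (0\<^sub>m q q)"
    proof -
      have "M * four_block_mat (minv A) (0\<^sub>m n q) (0\<^sub>m q n) (0\<^sub>m q q) = four_block_mat (A * minv A + Y * 0\<^sub>m q n) (A * 0\<^sub>m n q + Y * 0\<^sub>m q q)
         (adj Y * minv A + kap * 0\<^sub>m q n) (adj Y * 0\<^sub>m n q + kap * 0\<^sub>m q q)"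
        unfolding M_def by (rule mult_four_block_mat) (use A Y kap Ai in auto)
      moreover have "adj Y * minv A + 0\<^sub>m q n = adj Y * minv A"
        by (rule right_add_zero_mat) (use Y Ai in auto)
      ultimately show ?thesis using A Y kap Ai by simp
    qed
    have e2: "M * (adj L * minv S * L) = four_block_mat (0\<^sub>m n n) (0\<^sub>m n q) P (1\<^sub>m q)"
    proof -
      have a: "M * (adj L * minv S * L) = ((M * adj L) * minv S) * L"
        using Mc adjLc Si Lc by (simp add: assoc_dims carrier_matD)
      have b: "(M * adj L) * minv S = 0\<^sub>m n q @\<^sub>r 1\<^sub>m q"
      proof -
        have "(M * adj L) * minv S = (0\<^sub>m n q * minv S) @\<^sub>r (S * minv S)"
          unfolding MadjL by (rule append_rows_mult) (use Sc Si in auto)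
        thus ?thesis using Si by simp
      qed
      have "(0\<^sub>m n q @\<^sub>r 1\<^sub>m q) * L = four_block_mat (0\<^sub>m n q) (0\<^sub>m n 0) (1\<^sub>m q) (0\<^sub>m q 0) * four_block_mat P (1\<^sub>m q) (0\<^sub>m 0 n) (0\<^sub>m 0 q)"
        unfolding LP using rowcat_fb[OF Pc one_carrier_mat] append_rows_fb[where 'a=complex, OF zero_carrier_mat one_carrier_mat, of n q] by simp
      also have "\<dots> = four_block_mat (0\<^sub>m n q * P + 0\<^sub>m n 0 * 0\<^sub>m 0 n) (0\<^sub>m n q * 1\<^sub>m q + 0\<^sub>m n 0 * 0\<^sub>m 0 q)
          (1\<^sub>m q * P + 0\<^sub>m q 0 * 0\<^sub>m 0 n) (1\<^sub>m q * 1\<^sub>m q + 0\<^sub>m q 0 * 0\<^sub>m 0 q)"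
        by (rule mult_four_block_mat) (use Pc in auto)
      also have "\<dots> = four_block_mat (0\<^sub>m n n) (0\<^sub>m n q) P (1\<^sub>m q)" using Pc by simp
      finally have c: "(0\<^sub>m n q @\<^sub>r 1\<^sub>m q) * L = four_block_mat (0\<^sub>m n n) (0\<^sub>m n q) P (1\<^sub>m q)" .
      show ?thesis unfolding a b c ..
    qed
    have "M * G = M * four_block_mat (minv A) (0\<^sub>m n q) (0\<^sub>m q n) (0\<^sub>m q q) + M * (adj L * minv S * L)"
      unfolding G_def by (rule mult_add_distrib_mat[OF Mc FBc c2])
    also have "\<dots> = four_block_mat (1\<^sub>m n + 0\<^sub>m n n) (0\<^sub>m n q + 0\<^sub>m n q) (adj Y * minv A + P) (0\<^sub>m q q + 1\<^sub>m q)"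
      unfolding e1 e2 by (rule add_four_block_mat) (use Pc Y Ai in auto)
    also have "adj Y * minv A + P = 0\<^sub>m q n"
    proof -
      have X: "adj Y * minv A \<in> carrier_mat q n" using Y Ai by auto
      show ?thesis unfolding P_def using add_uminus_minus_mat[OF X X] minus_r_inv_mat[OF X] by simp
    qed
    finally show ?thesis by simp
  qed
  have GM: "minv M = G"
    by (rule minv_unique[OF Minv Mc _ MG]) (use Ai adjLc Si Lc in \<open>auto simp: G_def\<close>)
  fix z1 z2 :: "complex mat" and p :: nat assume z: "z1 \<in> carrier_mat n p" "z2 \<in> carrier_mat q p"
  let ?z = "z1 @\<^sub>r z2"
  have zc: "?z \<in> carrier_mat (n+q) p" using z by auto
  have FBc: "four_block_mat (minv A) (0\<^sub>m n q) (0\<^sub>m q n) (0\<^sub>m q q) \<in> carrier_mat (n+q) (n+q)" using Ai by auto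
  have c2: "adj L * minv S * L \<in> carrier_mat (n+q) (n+q)" using adjLc Si Lc by auto
  have azc: "adj ?z \<in> carrier_mat p (n+q)" using zc by simp
  have "adj ?z * minv M * ?z = (adj ?z * four_block_mat (minv A) (0\<^sub>m n q) (0\<^sub>m q n) (0\<^sub>m q q) + adj ?z * (adj L * minv S * L)) * ?z"
    unfolding GM G_def using mult_add_distrib_mat[OF azc FBc c2] by simp
  also have "\<dots> = adj ?z * four_block_mat (minv A) (0\<^sub>m n q) (0\<^sub>m q n) (0\<^sub>m q q) * ?z + adj ?z * (adj L * minv S * L) * ?z"
    by (rule add_mult_distrib_mat[OF mult_carrier_mat[OF azc FBc] mult_carrier_mat[OF azc c2] zc])
  also have "\<dots> = adj ?z * (four_block_mat (minv A) (0\<^sub>m n q) (0\<^sub>m q n) (0\<^sub>m q q) * ?z) + adj ?z * (adj L * minv S * L * ?z)"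
    using assoc_mult_mat[OF azc FBc zc] assoc_mult_mat[OF azc c2 zc] by simp
  also have "four_block_mat (minv A) (0\<^sub>m n q) (0\<^sub>m q n) (0\<^sub>m q q) * ?z = (minv A * z1 + 0\<^sub>m n q * z2) @\<^sub>r (0\<^sub>m q n * z1 + 0\<^sub>m q q * z2)"
    by (rule fb_mult_append) (use Ai z in auto)
  also have "\<dots> = (minv A * z1) @\<^sub>r 0\<^sub>m q p" using Ai z by simp
  also have "adj ?z * ((minv A * z1) @\<^sub>r 0\<^sub>m q p) = adj z1 * (minv A * z1) + adj z2 * 0\<^sub>m q p"
    unfolding adj_append_rows[OF z] by (rule rowcat_mult_append) (use z Ai in auto)
  also have "adj ?z * (adj L * minv S * L * ?z) = adj (L * ?z) * minv S * (L * ?z)"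
    using adj_mult[OF Lc zc] zc adjLc Si Lc by (simp add: assoc_dims carrier_matD)
  finally have fin0: "adj ?z * minv M * ?z = adj z1 * (minv A * z1) + adj z2 * 0\<^sub>m q p + adj (L * ?z) * minv S * (L * ?z)" .
  have "adj z2 * 0\<^sub>m q p = 0\<^sub>m p p" using right_mult_zero_mat[of "adj z2" p q p] z by auto
  hence fin: "adj ?z * minv M * ?z = adj z1 * (minv A * z1) + 0\<^sub>m p p + adj (L * ?z) * minv S * (L * ?z)"
    using fin0 by simp
  have "adj z1 * (minv A * z1) + 0\<^sub>m p p = adj z1 * minv A * z1"
    using right_add_zero_mat[of "adj z1 * (minv A * z1)" p p] assoc_mult_mat[of "adj z1" p n "minv A" n z1 p] z Ai by auto
  thus "adj ?z * minv M * ?z = adj z1 * minv A * z1 + adj (L * ?z) * minv S * (L * ?z)"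
    using fin by simp
qed


lemma mat_add_sub_cancel: "X \<in> carrier_mat n m \<Longrightarrow> Y \<in> carrier_mat n m \<Longrightarrow> (X + Y) - X = (Y :: complex mat)"
  by (rule eq_matI) auto

lemma invertible_adj: assumes "invertible_mat (adj G)" "G \<in> carrier_mat n n" shows "invertible_mat G"
proof -
  have c: "adj G \<in> carrier_mat n n" using assms by simp
  note m = minv[OF assms(1) c]
  have "G * adj (minv (adj G)) = 1\<^sub>m n"
    using adj_mult[OF m(1) c] m(3) by simp
  moreover have "adj (minv (adj G)) * G = 1\<^sub>m n"
    using adj_mult[OF c m(1)] m(2) by simp
  moreover have "dim_row (adj (minv (adj G))) = n" using m(1) by simp
  ultimately show ?thesis using assms unfolding invertible_mat_def inverts_mat_def
    by (intro conjI exI[of _ "adj (minv (adj G))"]) auto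
qed

lemma schur_hankel:
  fixes m :: "nat \<Rightarrow> complex mat"
  assumes q: "0 < q" and j: "1 \<le> j"
    and mc: "\<And>l. l \<le> 2*j \<Longrightarrow> m l \<in> carrier_mat q q \<and> adj (m l) = m l"
    and W: "wpd ((j+1)*q) (bmat q (j+1) (j+1) (\<lambda>l k. m (l+k)))"
  defines "A \<equiv> bmat q j j (\<lambda>l k. m (l+k))"
    and "Y \<equiv> bcol q j (\<lambda>l. m (j+l))"
  defines "S \<equiv> m (2*j) - adj Y * minv A * Y"
    and "L \<equiv> rowcat (- (adj Y * minv A)) (1\<^sub>m q)"
  shows "wpd (j*q) A"
    and "L * bmat q (j+1) (j+1) (\<lambda>l k. m (l+k)) = rowcat (0\<^sub>m q (j*q)) S"
    and "S \<in> carrier_mat q q" "adj S = S" "invertible_mat S"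
    and "L \<in> carrier_mat q ((j+1)*q)"
    and "rowcat (0\<^sub>m q (j*q)) (1\<^sub>m q) * adj L = 1\<^sub>m q"
    and "\<And>z1 z2 p. z1 \<in> carrier_mat (j*q) p \<Longrightarrow> z2 \<in> carrier_mat q p \<Longrightarrow>
          adj (z1 @\<^sub>r z2) * minv (bmat q (j+1) (j+1) (\<lambda>l k. m (l+k))) * (z1 @\<^sub>r z2)
          = adj z1 * minv A * z1 + adj (L * (z1 @\<^sub>r z2)) * minv S * (L * (z1 @\<^sub>r z2))"
proof -
  have NN: "(j+1)*q = j*q + q" by simp
  show WA: "wpd (j*q) A" unfolding A_def by (rule wpd_principal[OF W]) simp
  have Ac: "A \<in> carrier_mat (j*q) (j*q)" unfolding A_def by simp
  have Yc: "Y \<in> carrier_mat (j*q) q" unfolding Y_def by simp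
  have kc: "m (2*j) \<in> carrier_mat q q" "adj (m (2*j)) = m (2*j)" using mc[of "2*j"] by auto
  have adjY: "bmat q 1 j (\<lambda>_ k. m (j+k)) = adj Y"
  proof -
    have "adj Y = bmat q 1 j (\<lambda>_ k. adj (m (j+k)))" unfolding Y_def
      by (rule adj_bcol[OF q]) (use mc in auto)
    also have "\<dots> = bmat q 1 j (\<lambda>_ k. m (j+k))"
    proof -
      have "\<And>k. k < j \<Longrightarrow> adj (m (j+k)) = m (j+k)" using mc by auto
      thus ?thesis unfolding bmat_def by (intro eq_matI) (auto simp: less_mult_imp_div_less)
    qed
    finally show ?thesis by simp
  qed
  have MF: "bmat q (j+1) (j+1) (\<lambda>l k. m (l+k)) = four_block_mat A Y (adj Y) (m (2*j))"
  proof -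
    have "bmat q (j+1) (j+1) (\<lambda>l k. m (l+k)) = four_block_mat (bmat q j j (\<lambda>l k. m (l+k)))
       (bcol q j (\<lambda>l. m (l+j))) (bmat q 1 j (\<lambda>_ k. m (j+k))) (m (j+j))"
      by (rule bmat_split[OF q]) (use mc[of "j+j"] in auto)
    also have "bcol q j (\<lambda>l. m (l+j)) = Y" unfolding Y_def by (simp add: add.commute)
    also have "j + j = 2*j" by simp
    finally show ?thesis unfolding adjY A_def by simp
  qed
  have WM: "wpd (j*q+q) (four_block_mat A Y (adj Y) (m (2*j)))" using W unfolding MF NN .
  note sg = schur_gen[OF Ac Yc kc WM WA]
  have SL: "S = m (2*j) - adj Y * minv A * Y" "L = rowcat (- (adj Y * minv A)) (1\<^sub>m q)"
    unfolding S_def L_def by auto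
  show "L * bmat q (j+1) (j+1) (\<lambda>l k. m (l+k)) = rowcat (0\<^sub>m q (j*q)) S"
    unfolding MF SL by (rule sg(1))
  show "S \<in> carrier_mat q q" "adj S = S" "invertible_mat S" unfolding SL by (rule sg(2), rule sg(3), rule sg(4))
  show "L \<in> carrier_mat q ((j+1)*q)" unfolding SL NN by (rule sg(5))
  show "rowcat (0\<^sub>m q (j*q)) (1\<^sub>m q) * adj L = 1\<^sub>m q" unfolding SL by (rule sg(6))
  fix z1 z2 :: "complex mat" and p :: nat assume z: "z1 \<in> carrier_mat (j*q) p" "z2 \<in> carrier_mat q p"
  show "adj (z1 @\<^sub>r z2) * minv (bmat q (j+1) (j+1) (\<lambda>l k. m (l+k))) * (z1 @\<^sub>r z2)
          = adj z1 * minv A * z1 + adj (L * (z1 @\<^sub>r z2)) * minv S * (L * (z1 @\<^sub>r z2))"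
    unfolding MF SL by (rule sg(7)[OF z])
qed


lemma R_vv: assumes q: "0 < q" shows "Rm q j (complex_of_real a) * vv q j = xm q j a"
proof -
  note R = R_facts[OF q, of j a]
  have "Rm q j (complex_of_real a) * vv q j = Rm q j (complex_of_real a) * (Tl q j a * xm q j a)"
    unfolding I1[OF q] ..
  also have "\<dots> = (Rm q j (complex_of_real a) * Tl q j a) * xm q j a"
    by (rule assoc_mult_mat[symmetric, of _ "(j+1)*q" "(j+1)*q" _ "(j+1)*q" _ q]) (use R in auto)
  finally show ?thesis using R by simp
qed

lemma adjTl_adjR: assumes q: "0 < q" shows "adj (Tl q j a) * adj (Rm q j (complex_of_real a)) = 1\<^sub>m ((j+1)*q)"
proof -
  note R = R_facts[OF q, of j a]
  have "adj (Rm q j (complex_of_real a) * Tl q j a) = adj (Tl q j a) * adj (Rm q j (complex_of_real a))"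
    by (rule adj_mult) (use R in auto)
  thus ?thesis using R by simp
qed

lemma decomp: assumes q: "0 < q" and l: "ll \<in> carrier_mat ((j+1)*q) p"
  shows "ll = vv q j * (adj (xm q j a) * ll) + (adj (Tl q j a) * Jp q j) * (adj (Jp q j) * adj (Rm q j (complex_of_real a)) * ll)"
proof -
  let ?R = "Rm q j (complex_of_real a)"
  let ?N = "(j+1)*q"
  note R = R_facts[OF q, of j a]
  have Rc: "adj ?R \<in> carrier_mat ?N ?N" using R by simp
  have RL: "adj ?R * ll \<in> carrier_mat ?N p" using Rc l by simp
  have "ll = (adj (Tl q j a) * adj ?R) * ll" using adjTl_adjR[OF q, of j a] l by simp
  also have "\<dots> = adj (Tl q j a) * (adj ?R * ll)"
    by (rule assoc_mult_mat[of _ ?N ?N _ ?N _ p]) (use Rc l in auto)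
  also have "adj ?R * ll = (vv q j * adj (vv q j) + Jp q j * adj (Jp q j)) * (adj ?R * ll)"
    unfolding I7[OF q] using left_mult_one_mat[OF RL] by simp
  also have "\<dots> = vv q j * (adj (vv q j) * (adj ?R * ll)) + Jp q j * (adj (Jp q j) * (adj ?R * ll))"
  proof -
    have c1: "vv q j * adj (vv q j) \<in> carrier_mat ?N ?N" by (rule carrier_matI) simp_all
    have c2: "Jp q j * adj (Jp q j) \<in> carrier_mat ?N ?N" by (rule carrier_matI) simp_all
    show ?thesis using add_mult_distrib_mat[OF c1 c2 RL]
      assoc_mult_mat[OF vv_carrier adj_carrier[OF vv_carrier] RL]
      assoc_mult_mat[OF Jp_carrier adj_carrier[OF Jp_carrier] RL] by simp
  qed
  also have "adj (Tl q j a) * \<dots> = (adj (Tl q j a) * vv q j) * (adj (vv q j) * (adj ?R * ll)) + (adj (Tl q j a) * Jp q j) * (adj (Jp q j) * (adj ?R * ll))"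
  proof -
    have c3: "adj (vv q j) * (adj ?R * ll) \<in> carrier_mat q p" using mult_carrier_mat[OF adj_carrier[OF vv_carrier] RL] .
    have c4: "adj (Jp q j) * (adj ?R * ll) \<in> carrier_mat (j*q) p" using mult_carrier_mat[OF adj_carrier[OF Jp_carrier] RL] .
    have c1: "vv q j * (adj (vv q j) * (adj ?R * ll)) \<in> carrier_mat ?N p" using mult_carrier_mat[OF vv_carrier c3] .
    have c2: "Jp q j * (adj (Jp q j) * (adj ?R * ll)) \<in> carrier_mat ?N p" using mult_carrier_mat[OF Jp_carrier c4] .
    show ?thesis using mult_add_distrib_mat[OF adj_carrier[OF Tl_carrier] c1 c2]
      assoc_mult_mat[OF adj_carrier[OF Tl_carrier] vv_carrier c3]
      assoc_mult_mat[OF adj_carrier[OF Tl_carrier] Jp_carrier c4] by simp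
  qed
  also have "adj (vv q j) * (adj ?R * ll) = adj (xm q j a) * ll"
  proof -
    have "adj (vv q j) * (adj ?R * ll) = (adj (vv q j) * adj ?R) * ll"
      using assoc_mult_mat[OF adj_carrier[OF vv_carrier] Rc l] by simp
    also have "adj (vv q j) * adj ?R = adj (?R * vv q j)" by (rule adj_mult[symmetric]) (use R in auto)
    finally show ?thesis unfolding R_vv[OF q] .
  qed
  also have "adj (Jp q j) * (adj ?R * ll) = adj (Jp q j) * adj ?R * ll"
    using assoc_mult_mat[OF adj_carrier[OF Jp_carrier] Rc l] by simp
  finally show ?thesis unfolding I3[OF q] .
qed

lemma mu_form: assumes q: "0 < q" and K: "invertible_mat (K1 q b s j)"
  shows "mu q a b s j = adj (xm q j a) * minv (K1 q b s j) * xm q j a"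
proof -
  let ?R = "Rm q j (complex_of_real a)"
  let ?N = "(j+1)*q"
  note R = R_facts[OF q, of j a]
  have Kc: "K1 q b s j \<in> carrier_mat ?N ?N" unfolding K1_def bmat_def by simp
  note Ki = minv[OF K Kc]
  have "mu q a b s j = adj (vv q j) * adj ?R * minv (K1 q b s j) * ?R * vv q j"
    unfolding mu_def Let_def ..
  also have "\<dots> = (adj (vv q j) * adj ?R) * minv (K1 q b s j) * (?R * vv q j)"
    using R Ki by (simp add: assoc_dims carrier_matD)
  also have "adj (vv q j) * adj ?R = adj (?R * vv q j)" by (rule adj_mult[symmetric]) (use R in auto)
  finally show ?thesis unfolding R_vv[OF q] .
qed

lemma R_w: assumes q: "0 < q" and s: "\<And>l. l \<le> j+1 \<Longrightarrow> s l \<in> carrier_mat q q"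
  shows "Rm q j (complex_of_real a) * (u2 q a b s j + complex_of_real a \<cdot>\<^sub>m (vv q j * s 0)) = - cvec q b s j"
proof -
  let ?R = "Rm q j (complex_of_real a)"
  let ?N = "(j+1)*q"
  let ?w = "u2 q a b s j + complex_of_real a \<cdot>\<^sub>m (vv q j * s 0)"
  note R = R_facts[OF q, of j a]
  have wc: "?w \<in> carrier_mat ?N q" using s[of 0] by auto
  have "cvec q b s j = (?R * Tl q j a) * cvec q b s j" using R by simp
  also have "\<dots> = ?R * (Tl q j a * cvec q b s j)"
    by (rule assoc_mult_mat[of _ ?N ?N _ ?N _ q]) (use R in auto)
  also have "\<dots> = ?R * (- ?w)" using I2[OF q s] by simp
  also have "\<dots> = - (?R * ?w)" using R wc by (simp add: carrier_matD)
  finally have "- cvec q b s j = - (- (?R * ?w))" by simp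
  also have "\<dots> = ?R * ?w" by (rule eq_matI) auto
  finally show ?thesis by simp
qed

lemma lam_form: assumes q: "0 < q" and s: "\<And>l. l \<le> j+1 \<Longrightarrow> s l \<in> carrier_mat q q"
  and H: "invertible_mat (H2 q a b s j)"
  shows "lam q a b s j = adj (cvec q b s j) * minv (H2 q a b s j) * cvec q b s j"
proof -
  let ?R = "Rm q j (complex_of_real a)"
  let ?N = "(j+1)*q"
  let ?w = "u2 q a b s j + complex_of_real a \<cdot>\<^sub>m (vv q j * s 0)"
  note R = R_facts[OF q, of j a]
  have wc: "?w \<in> carrier_mat ?N q" using s[of 0] by auto
  have Hc: "H2 q a b s j \<in> carrier_mat ?N ?N" unfolding H2_def bmat_def by simp
  note Hi = minv[OF H Hc]
  have "lam q a b s j = adj ?w * adj ?R * minv (H2 q a b s j) * ?R * ?w"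
    unfolding lam_def Let_def ..
  also have "\<dots> = (adj ?w * adj ?R) * minv (H2 q a b s j) * (?R * ?w)"
    using R Hi wc by (simp add: assoc_dims carrier_matD)
  also have "adj ?w * adj ?R = adj (?R * ?w)" by (rule adj_mult[symmetric]) (use R wc in auto)
  also have "?R * ?w = - cvec q b s j" by (rule R_w[OF q s])
  also have "adj (- cvec q b s j) * minv (H2 q a b s j) * (- cvec q b s j) = adj (cvec q b s j) * minv (H2 q a b s j) * cvec q b s j"
    using Hi by (simp add: adj_uminus carrier_matD)
  finally show ?thesis .
qed


lemma adj_mult_dims: "dim_col A = dim_row B \<Longrightarrow> adj (A * B) = adj B * adj A"
  by (rule adj_mult[of A "dim_row A" "dim_col A" B "dim_col B"]) auto

lemma K1_dims[simp]: "dim_row (K1 q b s j) = (j+1)*q" "dim_col (K1 q b s j) = (j+1)*q"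
  unfolding K1_def by auto
lemma H2_dims[simp]: "dim_row (H2 q a b s j) = (j+1)*q" "dim_col (H2 q a b s j) = (j+1)*q"
  unfolding H2_def by auto
lemma K1_carrier[simp]: "K1 q b s j \<in> carrier_mat ((j+1)*q) ((j+1)*q)"
  unfolding K1_def by (rule bmat_carrier)
lemma H2_carrier[simp]: "H2 q a b s j \<in> carrier_mat ((j+1)*q) ((j+1)*q)"
  unfolding H2_def by (rule bmat_carrier)
lemma Rm_dims: "0 < q \<Longrightarrow> dim_row (Rm q j (complex_of_real a)) = (j+1)*q"
  "0 < q \<Longrightarrow> dim_col (Rm q j (complex_of_real a)) = (j+1)*q"
  using R_facts(1)[of q j a] by auto

lemma cK_herm: assumes "s l \<in> carrier_mat q q" "adj (s l) = s l" "s (l+1) \<in> carrier_mat q q" "adj (s (l+1)) = s (l+1)"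
  shows "cK b s l \<in> carrier_mat q q" "adj (cK b s l) = cK b s l"
  using assms unfolding cK_def by (auto simp: adj_minus[of _ q q] adj_smult minus_carrier_mat)

lemma shat_herm: assumes "s l \<in> carrier_mat q q" "adj (s l) = s l" "s (l+1) \<in> carrier_mat q q" "adj (s (l+1)) = s (l+1)"
   "s (l+2) \<in> carrier_mat q q" "adj (s (l+2)) = s (l+2)"
  shows "shat a b s l \<in> carrier_mat q q" "adj (shat a b s l) = shat a b s l"
proof -
  show c: "shat a b s l \<in> carrier_mat q q" using assms unfolding shat_def by (simp add: minus_carrier_mat)
  show "adj (shat a b s l) = shat a b s l"
    using assms unfolding shat_def
    by (simp add: adj_minus[of _ q q] adj_add[of _ q q] adj_smult)
qed


lemma mult_carrier_iff[simp]: "A * B \<in> carrier_mat n m \<longleftrightarrow> dim_row A = n \<and> dim_col B = m"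
  by auto
lemma adj_carrier_iff[simp]: "adj A \<in> carrier_mat n m \<longleftrightarrow> dim_col A = n \<and> dim_row A = m"
  by auto

lemma mat_neg_trick: assumes "U \<in> carrier_mat n m" "V \<in> carrier_mat n m" "W \<in> carrier_mat n m" "U + V = 0\<^sub>m n m"
  shows "W - U = W + (V::complex mat)"
proof (rule eq_matI)
  fix i k assume ik: "i < dim_row (W + V)" "k < dim_col (W + V)"
  have "(U + V) $$ (i,k) = 0" using assms(4) ik assms by simp
  hence "U $$ (i,k) + V $$ (i,k) = 0" using ik assms(1-3) by simp
  hence "U $$ (i,k) = - V $$ (i,k)" by (simp add: eq_neg_iff_add_eq_0)
  thus "(W - U) $$ (i,k) = (W + V) $$ (i,k)" using ik assms by simp
qed (use assms in auto)

lemma odd_step: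
  fixes q n j :: nat and a b :: real and s :: "nat \<Rightarrow> complex mat"
  assumes q: "0 < q" and j: "1 \<le> j" "j \<le> n"
    and s: "\<And>l. l \<le> 2*n+1 \<Longrightarrow> s l \<in> carrier_mat q q \<and> adj (s l) = s l"
    and WK: "wpd ((n+1)*q) (K1 q b s n)" and WH: "wpd (n*q) (H2 q a b s (n-1))"
  shows "Gam1 q b s j (complex_of_real a) \<in> carrier_mat q q"
    "The1 q b s j (complex_of_real a) \<in> carrier_mat q q"
    "Khat1 q b s j \<in> carrier_mat q q"
    "invertible_mat (Khat1 q b s j)"
    "mbold q a b s j = adj (Gam1 q b s j (complex_of_real a)) * minv (Khat1 q b s j) * Gam1 q b s j (complex_of_real a)"
    "invertible_mat (Gam1 q b s j (complex_of_real a))"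
    "The1 q b s j (complex_of_real a) * adj (Gam1 q b s j (complex_of_real a)) = Gam1 q b s j (complex_of_real a) * adj (The1 q b s j (complex_of_real a))"
proof -
  let ?a = "complex_of_real a"
  let ?N = "(j+1)*q"
  let ?R = "Rm q j ?a"
  let ?K = "K1 q b s j"
  let ?x = "xm q j a"
  let ?Y = "Yt1 q b s j"
  let ?A = "K1 q b s (j-1)"
  let ?S = "Khat1 q b s j"
  define L where "L = rowcat (- (adj ?Y * minv ?A)) (1\<^sub>m q)"
  note R = R_facts[OF q, of j a]
  have cKh: "\<And>l. l \<le> 2*j \<Longrightarrow> cK b s l \<in> carrier_mat q q \<and> adj (cK b s l) = cK b s l"
  proof -
    fix l assume l: "l \<le> 2*j"
    have "l \<le> 2*n+1" "l+1 \<le> 2*n+1" using l j by auto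
    hence "s l \<in> carrier_mat q q \<and> adj (s l) = s l" "s (l+1) \<in> carrier_mat q q \<and> adj (s (l+1)) = s (l+1)"
      using s by blast+
    thus "cK b s l \<in> carrier_mat q q \<and> adj (cK b s l) = cK b s l" using cK_herm[of s l q b] by auto
  qed
  have WKj: "wpd ((j+1)*q) (bmat q (j+1) (j+1) (\<lambda>l k. cK b s (l+k)))"
    by (rule wpd_principal[OF WK[unfolded K1_hankel]]) (use j in auto)
  note sh = schur_hankel[OF q j(1) cKh WKj]
  have eA: "bmat q j j (\<lambda>l k. cK b s (l+k)) = ?A" unfolding K1_hankel using j by simp
  have eY: "bcol q j (\<lambda>l. cK b s (j+l)) = ?Y" unfolding Yt1_def cK_def by (simp add: add.assoc)
  have eS: "cK b s (2*j) - adj ?Y * minv ?A * ?Y = ?S" unfolding Khat1_def cK_def using j by simp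
  have eK: "bmat q (j+1) (j+1) (\<lambda>l k. cK b s (l+k)) = ?K" unfolding K1_hankel ..
  note sh' = sh[unfolded eA eY eS eK, folded L_def]
  show Sc: "?S \<in> carrier_mat q q" by (rule sh'(3))
  have Lc: "L \<in> carrier_mat q ?N" by (rule sh'(6))
  have Lr: "dim_row L = q" "dim_col L = q + j*q" using Lc by auto
  have Ainv: "invertible_mat ?A" by (rule wpd_inv[OF sh'(1)])
  have Kinv: "invertible_mat ?K" by (rule wpd_inv[OF WKj[unfolded eK]])
  show Sinv: "invertible_mat ?S" by (rule sh'(5))
  have eG: "Gam1 q b s j ?a = L * ?x"
  proof -
    have "Gam1 q b s j ?a = L * ?R * vv q j" unfolding Gam1_def L_def using j by simp
    also have "\<dots> = L * (?R * vv q j)" by (rule assoc_mult_mat[OF Lc R(1) vv_carrier])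
    finally show ?thesis unfolding R_vv[OF q] .
  qed
  have eT: "The1 q b s j ?a = L * ?R * ut1 q b s j" unfolding The1_def L_def using j by simp
  show Gc: "Gam1 q b s j ?a \<in> carrier_mat q q" unfolding eG using Lc by simp
  show Tc: "The1 q b s j ?a \<in> carrier_mat q q" unfolding eT using Lc R(1) by simp
  define x' where "x' = xm q (j-1) a"
  have x'c: "x' \<in> carrier_mat (j*q) q" unfolding x'_def by (rule carrier_matI) (use j in simp_all)
  have xsplit: "?x = x' @\<^sub>r (?a^j \<cdot>\<^sub>m 1\<^sub>m q)"
  proof -
    have "?x = bcol q j (\<lambda>l. ?a^l \<cdot>\<^sub>m 1\<^sub>m q) @\<^sub>r (?a^j \<cdot>\<^sub>m 1\<^sub>m q)"
      unfolding xm_def by (rule bcol_split[OF q]) simp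
    also have "bcol q j (\<lambda>l. ?a^l \<cdot>\<^sub>m 1\<^sub>m q) = x'" unfolding x'_def xm_def using j by simp
    finally show ?thesis .
  qed
  have mu1: "mu q a b s j = adj x' * minv ?A * x' + adj (Gam1 q b s j ?a) * minv ?S * Gam1 q b s j ?a"
    unfolding mu_form[OF q Kinv] eG xsplit by (rule sh'(8)[OF _ x'c]) simp_all
  have mu0: "mu q a b s (j-1) = adj x' * minv ?A * x'"
    unfolding x'_def by (rule mu_form[OF q Ainv])
  show "mbold q a b s j = adj (Gam1 q b s j ?a) * minv ?S * Gam1 q b s j ?a"
  proof -
    have c1: "adj x' * minv ?A * x' \<in> carrier_mat q q" using x'c minv(1)[OF Ainv, of "j*q"] j
      by (simp add: K1_def bmat_def)
    have c2: "adj (Gam1 q b s j ?a) * minv ?S * Gam1 q b s j ?a \<in> carrier_mat q q"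
      using Gc minv(1)[OF Sinv Sc] by simp
    show ?thesis unfolding mbold_def using j mu1 mu0 mat_add_sub_cancel[OF c1 c2] by simp
  qed
  define B where "B = adj (Tl q j a) * Jp q j"
  have Bc: "B \<in> carrier_mat ?N (j*q)" unfolding B_def by (rule carrier_matI) simp_all
  have Kh: "adj ?K = ?K" using WKj[unfolded eK] unfolding wpd_def by simp
  define H' where "H' = H2 q a b s (j-1)"
  have sK: "\<And>l. l \<le> 2*j+1 \<Longrightarrow> s l \<in> carrier_mat q q" using s j by (meson add_le_mono le_trans mult_le_mono2 order_refl)
  have KB: "?K * B = H2 q a b s j * Jm q j" unfolding B_def by (rule I5[OF q sK])
  have Hp: "adj (Jm q j) * (?K * B) = H'"
  proof -
    have "adj (Jm q j) * (H2 q a b s j * Jm q j) = adj (Jm q j) * H2 q a b s j * Jm q j"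
      by (rule assoc_mult_mat[symmetric]) (rule adj_carrier[OF Jm_carrier], rule H2_carrier, rule Jm_carrier)
    also have "\<dots> = bmat q j j (\<lambda>l k. shat a b s (l+k))"
      unfolding Jm_def H2_hankel by (rule bmat_principal) simp
    also have "\<dots> = H'" unfolding H'_def H2_hankel using j by simp
    finally show ?thesis unfolding KB .
  qed
  have n1: "n - 1 + 1 = n" using j by simp
  have WH': "wpd (j*q) H'"
  proof -
    have "wpd (n*q) (bmat q n n (\<lambda>l k. shat a b s (l+k)))" using WH unfolding H2_hankel n1 .
    from wpd_principal[OF this j(2)] show ?thesis unfolding H'_def H2_hankel using j by simp
  qed
  have H'h: "adj H' = H'" and H'c: "H' \<in> carrier_mat (j*q) (j*q)" using WH' unfolding wpd_def by auto
  have H'eq: "H' = adj B * ?K * Jm q j"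
  proof -
    have "H' = adj H'" using H'h by simp
    also have "\<dots> = adj (?K * B) * Jm q j" unfolding Hp[symmetric]
      using adj_mult[OF adj_carrier[OF Jm_carrier] mult_carrier_mat[OF K1_carrier Bc]] by simp
    also have "adj (?K * B) = adj B * ?K" using adj_mult[OF K1_carrier Bc] Kh by simp
    finally show ?thesis .
  qed
  have orth: "L * ?K * Jm q j = 0\<^sub>m q (j*q)"
  proof -
    have "L * ?K * Jm q j = rowcat (0\<^sub>m q (j*q)) ?S * (1\<^sub>m (j*q) @\<^sub>r 0\<^sub>m q (j*q))"
      using sh'(2) J1 by simp
    also have "\<dots> = 0\<^sub>m q (j*q) * 1\<^sub>m (j*q) + ?S * 0\<^sub>m q (j*q)"
      by (rule rowcat_mult_append) (use Sc in auto)
    also have "\<dots> = 0\<^sub>m q (j*q)" using Sc by simp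
    finally show ?thesis .
  qed
  have Rd: "dim_row ?R = q + j*q" "dim_col ?R = q + j*q" using R(1) by auto
  have "invertible_mat (adj (Gam1 q b s j ?a))"
  proof (rule inv_crit)
    show "adj (Gam1 q b s j ?a) \<in> carrier_mat q q" using Gc by simp
    fix X assume X: "X \<in> carrier_mat q 1" "adj (Gam1 q b s j ?a) * X = 0\<^sub>m q 1"
    have Xd: "dim_row X = q" "dim_col X = 1" using X by auto
    define ll where "ll = adj L * X"
    have llc: "ll \<in> carrier_mat ?N 1" unfolding ll_def using Lc X by (intro carrier_matI) auto
    have h1: "adj ?x * ll = 0\<^sub>m q 1"
    proof -
      have "adj ?x * ll = adj (L * ?x) * X" unfolding ll_def using Lr Xd
        by (simp add: assoc_dims adj_mult_dims)
      thus ?thesis using X eG by simp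
    qed
    define rho where "rho = adj (Jp q j) * adj ?R * ll"
    have rhoc: "rho \<in> carrier_mat (j*q) 1" unfolding rho_def using llc Rd by (intro carrier_matI) auto
    have h2: "ll = B * rho"
    proof -
      have "ll = vv q j * (adj ?x * ll) + B * rho" unfolding B_def rho_def by (rule decomp[OF q llc])
      also have "vv q j * (adj ?x * ll) = 0\<^sub>m ?N 1" unfolding h1 by simp
      finally show ?thesis using Bc rhoc by simp
    qed
    have h3: "adj rho * H' * rho = 0\<^sub>m 1 1"
    proof -
      have "adj rho * H' * rho = adj (B * rho) * (?K * (Jm q j * rho))"
        unfolding H'eq using Bc rhoc by (simp add: assoc_dims adj_mult_dims)
      also have "adj (B * rho) = adj X * L" unfolding h2[symmetric] ll_def using Lr Xd by (simp add: adj_mult_dims)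
      also have "adj X * L * (?K * (Jm q j * rho)) = adj X * ((L * ?K * Jm q j) * rho)"
        using Lr Xd rhoc by (simp add: assoc_dims)
      also have "\<dots> = 0\<^sub>m 1 1" unfolding orth using Xd rhoc by simp
      finally show ?thesis .
    qed
    have "rho = 0\<^sub>m (j*q) 1" using WH' rhoc h3 unfolding wpd_def by auto
    hence "ll = 0\<^sub>m ?N 1" using h2 Bc by simp
    moreover have rc: "rowcat (0\<^sub>m q (j*q)) (1\<^sub>m q) \<in> carrier_mat q ?N"
      by (rule carrier_matI) (auto simp: rowcat_def)
    ultimately have "rowcat (0\<^sub>m q (j*q)) (1\<^sub>m q) * ll = 0\<^sub>m q 1" using right_mult_zero_mat[OF rc, of 1] by simp
    moreover have "rowcat (0\<^sub>m q (j*q)) (1\<^sub>m q) * ll = X"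
    proof -
      have "rowcat (0\<^sub>m q (j*q)) (1\<^sub>m q) * ll = (rowcat (0\<^sub>m q (j*q)) (1\<^sub>m q) * adj L) * X"
        unfolding ll_def using Lr Xd by (simp add: assoc_dims rowcat_def)
      moreover have "rowcat (0\<^sub>m q (j*q)) (1\<^sub>m q) * adj L = 1\<^sub>m q" using sh'(7) by simp
      ultimately show ?thesis using Xd by simp
    qed
    ultimately show "X = 0\<^sub>m q 1" by simp
  qed
  thus Ginv: "invertible_mat (Gam1 q b s j ?a)" by (rule invertible_adj[OF _ Gc])
  let ?G = "Gam1 q b s j ?a"
  let ?T = "The1 q b s j ?a"
  define rho where "rho = adj (Jp q j) * adj ?R * adj L"
  have rhoc: "rho \<in> carrier_mat (j*q) q" unfolding rho_def using Lr Rd by (intro carrier_matI) auto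
  have aLc: "adj L \<in> carrier_mat ?N q" using Lc by simp
  have dec: "adj L = vv q j * adj ?G + B * rho"
  proof -
    have "adj L = vv q j * (adj ?x * adj L) + B * rho" unfolding B_def rho_def by (rule decomp[OF q aLc])
    moreover have "adj ?x * adj L = adj ?G" unfolding eG using Lr by (simp add: adj_mult_dims)
    ultimately show ?thesis by simp
  qed
  have s0: "s 0 \<in> carrier_mat q q" "adj (s 0) = s 0" using s[of 0] by auto
  have vR: "adj (vv q j) * ?R = adj (vv q j)"
  proof -
    have "adj (adj (Tl q j a) * vv q j) = adj (vv q j) * Tl q j a" by (simp add: adj_mult_dims)
    hence e: "adj (vv q j) * Tl q j a = adj (vv q j)" using I3[OF q, of j a] by simp
    have "adj (vv q j) * ?R = (adj (vv q j) * Tl q j a) * ?R" unfolding e ..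
    also have "\<dots> = adj (vv q j) * (Tl q j a * ?R)" using Rd by (simp add: assoc_dims)
    finally show ?thesis using R(2) by simp
  qed
  have f1: "adj (ut1 q b s j) * adj ?R * vv q j = s 0"
  proof -
    have "adj (ut1 q b s j) * adj ?R * vv q j = adj (adj (vv q j) * ?R * ut1 q b s j)"
      using Rd by (simp add: adj_mult_dims assoc_dims)
    also have "\<dots> = adj (s 0)" unfolding vR I9[of q s, OF q s0(1)] ..
    finally show ?thesis using s0 by simp
  qed
  have sj: "\<And>l. l \<le> j \<Longrightarrow> s l \<in> carrier_mat q q" using sK by auto
  have f2: "adj (ut1 q b s j) * adj ?R * B = - (adj (vv q j) * ?K * Jm q j)"
  proof -
    have "adj ?R * B = adj (Tl q j a * ?R) * Jp q j" unfolding B_def using Rd by (simp add: adj_mult_dims assoc_dims)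
    hence "adj ?R * B = Jp q j" using R(2) by simp
    hence "adj (ut1 q b s j) * adj ?R * B = adj (adj (Jp q j) * ut1 q b s j)"
      using Rd Bc by (simp add: adj_mult_dims assoc_dims)
    also have "adj (Jp q j) * ut1 q b s j = - (adj (Jm q j) * cvec q b s j)" by (rule I4[OF q sj])
    also have "adj (- (adj (Jm q j) * cvec q b s j)) = - adj (adj (Jm q j) * cvec q b s j)" by (rule adj_uminus)
    also have "adj (adj (Jm q j) * cvec q b s j) = adj (cvec q b s j) * adj (adj (Jm q j))"
      by (rule adj_mult_dims) simp
    also have "adj (adj (Jm q j)) = Jm q j" by simp
    also have "cvec q b s j = ?K * vv q j" unfolding K1_vv[OF q] ..
    also have "adj (?K * vv q j) = adj (vv q j) * ?K" using Kh by (simp add: adj_mult_dims)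
    finally show ?thesis by simp
  qed
  define U where "U = ?G * adj (vv q j) * ?K * Jm q j * rho"
  define V where "V = adj rho * H' * rho"
  define W where "W = ?G * s 0 * adj ?G"
  have Uc: "U \<in> carrier_mat q q" unfolding U_def using Gc rhoc by (intro carrier_matI) auto
  have Vc: "V \<in> carrier_mat q q" unfolding V_def using H'c rhoc by (intro carrier_matI) auto
  have Wc: "W \<in> carrier_mat q q" unfolding W_def using Gc s0 by (intro carrier_matI) auto
  have adjT: "adj ?T = s 0 * adj ?G - adj (vv q j) * ?K * Jm q j * rho"
  proof -
    have "adj ?T = adj (ut1 q b s j) * adj ?R * adj L" unfolding eT using Lr Rd by (simp add: adj_mult_dims)
    also have "\<dots> = adj (ut1 q b s j) * adj ?R * (vv q j * adj ?G + B * rho)" using dec by simp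
    also have "\<dots> = (adj (ut1 q b s j) * adj ?R * vv q j) * adj ?G + (adj (ut1 q b s j) * adj ?R * B) * rho"
    proof -
      have c1: "adj (ut1 q b s j) * adj ?R \<in> carrier_mat q ?N" using Rd by (intro carrier_matI) auto
      have c2: "vv q j * adj ?G \<in> carrier_mat ?N q" using Gc by (intro carrier_matI) auto
      have c3: "B * rho \<in> carrier_mat ?N q" using Bc rhoc by (intro carrier_matI) auto
      show ?thesis unfolding mult_add_distrib_mat[OF c1 c2 c3] using Gc Bc rhoc Rd by (simp add: assoc_dims)
    qed
    also have "\<dots> = s 0 * adj ?G + (- (adj (vv q j) * ?K * Jm q j)) * rho" unfolding f1 f2 ..
    also have "\<dots> = s 0 * adj ?G - adj (vv q j) * ?K * Jm q j * rho"
    proof -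
      have "(- (adj (vv q j) * ?K * Jm q j)) * rho = - (adj (vv q j) * ?K * Jm q j * rho)" using rhoc by simp
      moreover have "adj (vv q j) * ?K * Jm q j * rho \<in> carrier_mat q q" using rhoc by (intro carrier_matI) auto
      moreover have "s 0 * adj ?G \<in> carrier_mat q q" using s0 Gc by (intro carrier_matI) auto
      ultimately show ?thesis using add_uminus_minus_mat by metis
    qed
    finally show ?thesis .
  qed
  have GT: "?G * adj ?T = W - U"
  proof -
    have c1: "s 0 * adj ?G \<in> carrier_mat q q" using s0 Gc by (intro carrier_matI) auto
    have c2: "adj (vv q j) * ?K * Jm q j * rho \<in> carrier_mat q q" using rhoc by (intro carrier_matI) auto
    show ?thesis unfolding adjT mult_minus_distrib_mat[OF Gc c1 c2] W_def U_def using Gc s0 rhoc by (simp add: assoc_dims)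
  qed
  have UV: "U + V = 0\<^sub>m q q"
  proof -
    have Ld: "L = ?G * adj (vv q j) + adj rho * adj B"
      using arg_cong[OF dec, of adj] Gc Bc rhoc by (simp add: adj_mult_dims adj_add[of _ ?N q])
    have "L * ?K * Jm q j * rho = 0\<^sub>m q q" unfolding orth using rhoc by simp
    moreover have "L * ?K * Jm q j * rho = U + V"
    proof -
      have c1: "?G * adj (vv q j) \<in> carrier_mat q ?N" using Gc by (intro carrier_matI) auto
      have c2: "adj rho * adj B \<in> carrier_mat q ?N" using Bc rhoc by (intro carrier_matI) auto
      have "L * ?K * Jm q j * rho = (?G * adj (vv q j)) * (?K * Jm q j * rho) + (adj rho * adj B) * (?K * Jm q j * rho)"
        unfolding Ld using add_mult_distrib_mat[OF c1 c2, of "?K * Jm q j * rho" q] rhoc Bc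
        by (simp add: assoc_dims carrier_matD)
      also have "\<dots> = U + V" unfolding U_def V_def H'eq using Gc Bc rhoc by (simp add: assoc_dims)
      finally show ?thesis .
    qed
    ultimately show ?thesis by simp
  qed
  have GT2: "?G * adj ?T = W + V" unfolding GT by (rule mat_neg_trick[OF Uc Vc Wc UV])
  have WVh: "adj (W + V) = W + V"
  proof -
    have "adj W = W" unfolding W_def using Gc s0 by (simp add: adj_mult_dims assoc_dims)
    moreover have "adj V = V" unfolding V_def using H'c H'h rhoc by (simp add: adj_mult_dims assoc_dims)
    ultimately show ?thesis using adj_add[OF Wc Vc] by simp
  qed
  show "?T * adj ?G = ?G * adj ?T"
  proof -
    have "?T * adj ?G = adj (?G * adj ?T)" using Gc Tc by (simp add: adj_mult_dims)
    thus ?thesis unfolding GT2 WVh .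
  qed
qed


lemma mat_neg_trick2: assumes "U \<in> carrier_mat n m" "V \<in> carrier_mat n m" "W \<in> carrier_mat n m" "U + V = 0\<^sub>m n m"
  shows "W + U = W - (V::complex mat)"
proof (rule eq_matI)
  fix i k assume ik: "i < dim_row (W - V)" "k < dim_col (W - V)"
  have "(U + V) $$ (i,k) = 0" using assms(4) ik assms by simp
  hence "U $$ (i,k) + V $$ (i,k) = 0" using ik assms(1-3) by simp
  hence "U $$ (i,k) = - V $$ (i,k)" by (simp add: eq_neg_iff_add_eq_0)
  thus "(W + U) $$ (i,k) = (W - V) $$ (i,k)" using ik assms by simp
qed (use assms in auto)

lemma even_step:
  fixes q n j :: nat and a b :: real and s :: "nat \<Rightarrow> complex mat"
  assumes q: "0 < q" and j: "1 \<le> j" "j < n"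
    and s: "\<And>l. l \<le> 2*n+1 \<Longrightarrow> s l \<in> carrier_mat q q \<and> adj (s l) = s l"
    and WK: "wpd ((n+1)*q) (K1 q b s n)" and WH: "wpd (n*q) (H2 q a b s (n-1))"
  shows "P2 q a b s j (complex_of_real a) \<in> carrier_mat q q"
    "Q2 q a b s j (complex_of_real a) \<in> carrier_mat q q"
    "Hhat2 q a b s j \<in> carrier_mat q q"
    "invertible_mat (Hhat2 q a b s j)"
    "lbold q a b s j = adj (Q2 q a b s j (complex_of_real a)) * minv (Hhat2 q a b s j) * Q2 q a b s j (complex_of_real a)"
    "invertible_mat (Q2 q a b s j (complex_of_real a))"
    "P2 q a b s j (complex_of_real a) * adj (Q2 q a b s j (complex_of_real a)) = Q2 q a b s j (complex_of_real a) * adj (P2 q a b s j (complex_of_real a))"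
proof -
  let ?a = "complex_of_real a"
  let ?N = "(j+1)*q"
  let ?R = "Rm q j ?a"
  let ?K = "K1 q b s j"
  let ?H = "H2 q a b s j"
  let ?x = "xm q j a"
  let ?c = "cvec q b s j"
  let ?Y = "Y2 q a b s j"
  let ?A = "H2 q a b s (j-1)"
  let ?S = "Hhat2 q a b s j"
  define L where "L = rowcat (- (adj ?Y * minv ?A)) (1\<^sub>m q)"
  note R = R_facts[OF q, of j a]
  have Rd: "dim_row ?R = q + j*q" "dim_col ?R = q + j*q" using R(1) by auto
  have shh: "\<And>l. l \<le> 2*j \<Longrightarrow> shat a b s l \<in> carrier_mat q q \<and> adj (shat a b s l) = shat a b s l"
  proof -
    fix l assume l: "l \<le> 2*j"
    have "l+2 \<le> 2*n+1" using l j by auto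
    hence "s l \<in> carrier_mat q q \<and> adj (s l) = s l" "s (l+1) \<in> carrier_mat q q \<and> adj (s (l+1)) = s (l+1)"
      "s (l+2) \<in> carrier_mat q q \<and> adj (s (l+2)) = s (l+2)"
      using s by simp_all
    thus "shat a b s l \<in> carrier_mat q q \<and> adj (shat a b s l) = shat a b s l" using shat_herm[of s l q a b] by auto
  qed
  have n1: "n - 1 + 1 = n" using j by simp
  have WHn: "wpd (n*q) (bmat q n n (\<lambda>l k. shat a b s (l+k)))" using WH unfolding H2_hankel n1 .
  have WHj: "wpd ((j+1)*q) (bmat q (j+1) (j+1) (\<lambda>l k. shat a b s (l+k)))"
    by (rule wpd_principal[OF WHn]) (use j in auto)
  note sh = schur_hankel[OF q j(1) shh WHj]
  have eA: "bmat q j j (\<lambda>l k. shat a b s (l+k)) = ?A" unfolding H2_hankel using j by simp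
  have eY: "bcol q j (\<lambda>l. shat a b s (j+l)) = ?Y" unfolding Y2_def ..
  have eS: "shat a b s (2*j) - adj ?Y * minv ?A * ?Y = ?S" unfolding Hhat2_def using j by simp
  have eH: "bmat q (j+1) (j+1) (\<lambda>l k. shat a b s (l+k)) = ?H" unfolding H2_hankel ..
  note sh' = sh[unfolded eA eY eS eH, folded L_def]
  show Sc: "?S \<in> carrier_mat q q" by (rule sh'(3))
  have Lc: "L \<in> carrier_mat q ?N" by (rule sh'(6))
  have Lr: "dim_row L = q" "dim_col L = q + j*q" using Lc by auto
  have Ainv: "invertible_mat ?A" by (rule wpd_inv[OF sh'(1)])
  have Hinv: "invertible_mat ?H" by (rule wpd_inv[OF WHj[unfolded eH]])
  show Sinv: "invertible_mat ?S" by (rule sh'(5))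
  have Hh: "adj ?H = ?H" using WHj[unfolded eH] unfolding wpd_def by simp
  have WKj: "wpd ((j+1)*q) ?K" using wpd_principal[OF WK[unfolded K1_hankel], of "j+1"] j unfolding K1_hankel by simp
  have Kh: "adj ?K = ?K" using WKj unfolding wpd_def by simp
  have sK: "\<And>l. l \<le> 2*j+1 \<Longrightarrow> s l \<in> carrier_mat q q" using s j by (meson add_le_mono le_trans less_imp_le_nat mult_le_mono2 order_refl)
  have sj: "\<And>l. l \<le> j+1 \<Longrightarrow> s l \<in> carrier_mat q q" using sK by auto
  have eP: "P2 q a b s j ?a = L * ?x"
  proof -
    have "P2 q a b s j ?a = L * ?R * vv q j" unfolding P2_def L_def using j by simp
    also have "\<dots> = L * (?R * vv q j)" by (rule assoc_mult_mat[OF Lc R(1) vv_carrier])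
    finally show ?thesis unfolding R_vv[OF q] .
  qed
  have eQ: "Q2 q a b s j ?a = L * ?c"
  proof -
    have "Q2 q a b s j ?a = - (L * ?R * (u2 q a b s j + ?a \<cdot>\<^sub>m (vv q j * s 0)))" unfolding Q2_def L_def using j by simp
    also have "\<dots> = - (L * (?R * (u2 q a b s j + ?a \<cdot>\<^sub>m (vv q j * s 0))))"
      using Lr Rd sj[of 0] by (simp add: assoc_dims carrier_matD)
    also have "?R * (u2 q a b s j + ?a \<cdot>\<^sub>m (vv q j * s 0)) = - ?c" by (rule R_w[OF q sj])
    finally show ?thesis using Lr by simp
  qed
  show Pc: "P2 q a b s j ?a \<in> carrier_mat q q" unfolding eP using Lc by simp
  show Qc: "Q2 q a b s j ?a \<in> carrier_mat q q" unfolding eQ using Lc by simp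
  define c' where "c' = cvec q b s (j-1)"
  have c'c: "c' \<in> carrier_mat (j*q) q" unfolding c'_def by (rule carrier_matI) (use j in simp_all)
  have csplit: "?c = c' @\<^sub>r cK b s j"
  proof -
    have "?c = bcol q j (cK b s) @\<^sub>r cK b s j"
      unfolding cvec_def by (rule bcol_split[OF q]) (use sj in \<open>simp add: cK_def minus_carrier_mat\<close>)
    also have "bcol q j (cK b s) = c'" unfolding c'_def cvec_def using j by simp
    finally show ?thesis .
  qed
  have cKc: "cK b s j \<in> carrier_mat q q" using sj[of "j+1"] by (simp add: cK_def minus_carrier_mat)
  have lam1: "lam q a b s j = adj c' * minv ?A * c' + adj (Q2 q a b s j ?a) * minv ?S * Q2 q a b s j ?a"
  proof -
    have "lam q a b s j = adj ?c * minv ?H * ?c" by (rule lam_form[OF q sj Hinv])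
    also have "\<dots> = adj c' * minv ?A * c' + adj (L * ?c) * minv ?S * (L * ?c)"
      unfolding csplit by (rule sh'(8)[OF _ c'c cKc]) simp
    finally show ?thesis unfolding eQ .
  qed
  have sj': "\<And>l. l \<le> j - 1 + 1 \<Longrightarrow> s l \<in> carrier_mat q q" using sj by auto
  have lam0: "lam q a b s (j-1) = adj c' * minv ?A * c'"
    unfolding c'_def by (rule lam_form[OF q sj' Ainv])
  show "lbold q a b s j = adj (Q2 q a b s j ?a) * minv ?S * Q2 q a b s j ?a"
  proof -
    have c1: "adj c' * minv ?A * c' \<in> carrier_mat q q" using c'c minv(1)[OF Ainv, of "j*q"] j
      by (simp add: H2_def bmat_def)
    have c2: "adj (Q2 q a b s j ?a) * minv ?S * Q2 q a b s j ?a \<in> carrier_mat q q"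
      using Qc minv(1)[OF Sinv Sc] by simp
    show ?thesis unfolding lbold_def using j lam1 lam0 mat_add_sub_cancel[OF c1 c2] by simp
  qed
  define B where "B = adj (Tl q j a) * Jp q j"
  have Bc: "B \<in> carrier_mat ?N (j*q)" unfolding B_def by (rule carrier_matI) simp_all
  have KB: "?K * B = ?H * Jm q j" unfolding B_def by (rule I5[OF q sK])
  have orth: "L * ?H * Jm q j = 0\<^sub>m q (j*q)"
  proof -
    have "L * ?H * Jm q j = rowcat (0\<^sub>m q (j*q)) ?S * (1\<^sub>m (j*q) @\<^sub>r 0\<^sub>m q (j*q))"
      using sh'(2) J1 by simp
    also have "\<dots> = 0\<^sub>m q (j*q) * 1\<^sub>m (j*q) + ?S * 0\<^sub>m q (j*q)"
      by (rule rowcat_mult_append) (use Sc in auto)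
    also have "\<dots> = 0\<^sub>m q (j*q)" using Sc by simp
    finally show ?thesis .
  qed
  have cK: "?c = ?K * vv q j" unfolding K1_vv[OF q] ..
  have adjc: "adj ?c = adj (vv q j) * ?K" unfolding cK using Kh by (simp add: adj_mult_dims)
  have "invertible_mat (adj (Q2 q a b s j ?a))"
  proof (rule inv_crit)
    show "adj (Q2 q a b s j ?a) \<in> carrier_mat q q" using Qc by simp
    fix X assume X: "X \<in> carrier_mat q 1" "adj (Q2 q a b s j ?a) * X = 0\<^sub>m q 1"
    have Xd: "dim_row X = q" "dim_col X = 1" using X by auto
    define ll where "ll = adj L * X"
    have llc: "ll \<in> carrier_mat ?N 1" unfolding ll_def using Lc X by (intro carrier_matI) auto
    have h1: "adj (vv q j) * ?K * ll = 0\<^sub>m q 1"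
    proof -
      have e: "adj (L * ?c) = adj (vv q j) * ?K * adj L" unfolding adjc[symmetric] by (rule adj_mult_dims) (simp add: Lr)
      have "adj (vv q j) * ?K * ll = adj (L * ?c) * X" unfolding ll_def e
        using Lr Xd by (simp add: assoc_dims)
      thus ?thesis using X eQ by simp
    qed
    define rho where "rho = adj (Jp q j) * adj ?R * ll"
    have rhoc: "rho \<in> carrier_mat (j*q) 1" unfolding rho_def using llc Rd by (intro carrier_matI) auto
    define z where "z = adj ?x * ll"
    have zc: "z \<in> carrier_mat q 1" unfolding z_def using llc by (intro carrier_matI) auto
    have h2: "ll = vv q j * z + B * rho" unfolding B_def rho_def z_def by (rule decomp[OF q llc])
    have h3: "adj ll * ?K * ll = 0\<^sub>m 1 1"
    proof -
      have c1: "vv q j * z \<in> carrier_mat ?N 1" using zc by (intro carrier_matI) auto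
      have c2: "B * rho \<in> carrier_mat ?N 1" using Bc rhoc by (intro carrier_matI) auto
      have c0: "adj ll * ?K \<in> carrier_mat 1 ?N" using llc by (intro carrier_matI) auto
      have "adj ll * ?K * ll = (adj ll * ?K) * (vv q j * z + B * rho)"
        by (rule arg_cong[where f="\<lambda>t. (adj ll * ?K) * t"]) (rule h2)
      also have "\<dots> = (adj ll * ?K) * (vv q j * z) + (adj ll * ?K) * (B * rho)"
        by (rule mult_add_distrib_mat[OF c0 c1 c2])
      finally have split: "adj ll * ?K * ll = (adj ll * ?K) * (vv q j * z) + (adj ll * ?K) * (B * rho)" .
      have "(adj ll * ?K) * (vv q j * z) = adj (adj (vv q j) * ?K * ll) * z"
        using llc zc Kh by (simp add: assoc_dims adj_mult_dims carrier_matD)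
      also have "\<dots> = 0\<^sub>m 1 1" unfolding h1 using zc by simp
      finally have e1: "(adj ll * ?K) * (vv q j * z) = 0\<^sub>m 1 1" .
      have KBr: "?K * (B * rho) = ?H * (Jm q j * rho)"
      proof -
        have "?K * (B * rho) = (?K * B) * rho" using Bc rhoc by (simp add: assoc_dims carrier_matD)
        also have "\<dots> = ?H * (Jm q j * rho)" unfolding KB using rhoc by (simp add: assoc_dims carrier_matD)
        finally show ?thesis .
      qed
      have "(adj ll * ?K) * (B * rho) = adj X * ((L * ?H * Jm q j) * rho)"
        unfolding ll_def using Lr Xd rhoc Bc KBr by (simp add: assoc_dims adj_mult_dims carrier_matD)
      also have "\<dots> = 0\<^sub>m 1 1" unfolding orth using Xd rhoc by simp
      finally have e2: "(adj ll * ?K) * (B * rho) = 0\<^sub>m 1 1" .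
      show ?thesis unfolding split e1 e2 by simp
    qed
    have "ll = 0\<^sub>m ?N 1" using WKj llc h3 unfolding wpd_def by auto
    moreover have rc: "rowcat (0\<^sub>m q (j*q)) (1\<^sub>m q) \<in> carrier_mat q ?N"
      by (rule carrier_matI) (auto simp: rowcat_def)
    ultimately have "rowcat (0\<^sub>m q (j*q)) (1\<^sub>m q) * ll = 0\<^sub>m q 1" using right_mult_zero_mat[OF rc, of 1] by simp
    moreover have "rowcat (0\<^sub>m q (j*q)) (1\<^sub>m q) * ll = X"
    proof -
      have "rowcat (0\<^sub>m q (j*q)) (1\<^sub>m q) * ll = (rowcat (0\<^sub>m q (j*q)) (1\<^sub>m q) * adj L) * X"
        unfolding ll_def using Lr Xd by (simp add: assoc_dims rowcat_def)
      moreover have "rowcat (0\<^sub>m q (j*q)) (1\<^sub>m q) * adj L = 1\<^sub>m q" using sh'(7) by simp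
      ultimately show ?thesis using Xd by simp
    qed
    ultimately show "X = 0\<^sub>m q 1" by simp
  qed
  thus Qinv: "invertible_mat (Q2 q a b s j ?a)" by (rule invertible_adj[OF _ Qc])
  let ?P = "P2 q a b s j ?a"
  let ?Q = "Q2 q a b s j ?a"
  define rho where "rho = adj (Jp q j) * adj ?R * adj L"
  have rhoc: "rho \<in> carrier_mat (j*q) q" unfolding rho_def using Lr Rd by (intro carrier_matI) auto
  have aLc: "adj L \<in> carrier_mat ?N q" using Lc by simp
  have dec: "adj L = vv q j * adj ?P + B * rho"
  proof -
    have "adj L = vv q j * (adj ?x * adj L) + B * rho" unfolding B_def rho_def by (rule decomp[OF q aLc])
    moreover have "adj ?x * adj L = adj ?P" unfolding eP using Lr by (simp add: adj_mult_dims)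
    ultimately show ?thesis by simp
  qed
  have KBr: "?K * (B * rho) = ?H * (Jm q j * rho)"
  proof -
    have "?K * (B * rho) = (?K * B) * rho" using Bc rhoc by (simp add: assoc_dims carrier_matD)
    also have "\<dots> = ?H * (Jm q j * rho)" unfolding KB using rhoc by (simp add: assoc_dims carrier_matD)
    finally show ?thesis .
  qed
  define c0 where "c0 = adj (vv q j) * ?K * vv q j"
  have c0c: "c0 \<in> carrier_mat q q" unfolding c0_def by (intro carrier_matI) auto
  have c0h: "adj c0 = c0" unfolding c0_def using Kh by (simp add: adj_mult_dims assoc_dims)
  define U where "U = ?P * adj (vv q j) * ?H * Jm q j * rho"
  define V where "V = adj rho * adj B * ?K * B * rho"
  define W where "W = ?P * c0 * adj ?P"
  have Uc: "U \<in> carrier_mat q q" unfolding U_def using Pc rhoc by (intro carrier_matI) auto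
  have Vc: "V \<in> carrier_mat q q" unfolding V_def using Bc rhoc by (intro carrier_matI) auto
  have Wc: "W \<in> carrier_mat q q" unfolding W_def using Pc c0c by (intro carrier_matI) auto
  have adjQ: "adj ?Q = c0 * adj ?P + adj (vv q j) * ?H * Jm q j * rho"
  proof -
    have "adj ?Q = adj (vv q j) * ?K * adj L" unfolding eQ adjc[symmetric] by (rule adj_mult_dims) (simp add: Lr)
    also have "\<dots> = (adj (vv q j) * ?K) * (vv q j * adj ?P + B * rho)" using dec by simp
    also have "\<dots> = (adj (vv q j) * ?K) * (vv q j * adj ?P) + (adj (vv q j) * ?K) * (B * rho)"
    proof -
      have c1: "adj (vv q j) * ?K \<in> carrier_mat q ?N" by (intro carrier_matI) auto
      have c2: "vv q j * adj ?P \<in> carrier_mat ?N q" using Pc by (intro carrier_matI) auto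
      have c3: "B * rho \<in> carrier_mat ?N q" using Bc rhoc by (intro carrier_matI) auto
      show ?thesis by (rule mult_add_distrib_mat[OF c1 c2 c3])
    qed
    also have "(adj (vv q j) * ?K) * (vv q j * adj ?P) = c0 * adj ?P" unfolding c0_def using Pc by (simp add: assoc_dims carrier_matD)
    also have "(adj (vv q j) * ?K) * (B * rho) = adj (vv q j) * ?H * Jm q j * rho"
      using KBr Bc rhoc by (simp add: assoc_dims carrier_matD)
    finally show ?thesis .
  qed
  have PQ: "?P * adj ?Q = W + U"
  proof -
    have c1: "c0 * adj ?P \<in> carrier_mat q q" using c0c Pc by (intro carrier_matI) auto
    have c2: "adj (vv q j) * ?H * Jm q j * rho \<in> carrier_mat q q" using rhoc by (intro carrier_matI) auto
    show ?thesis unfolding adjQ mult_add_distrib_mat[OF Pc c1 c2] W_def U_def using Pc c0c rhoc by (simp add: assoc_dims carrier_matD)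
  qed
  have UV: "U + V = 0\<^sub>m q q"
  proof -
    have Ld: "L = ?P * adj (vv q j) + adj rho * adj B"
      using arg_cong[OF dec, of adj] Pc Bc rhoc by (simp add: adj_mult_dims adj_add[of _ ?N q])
    have "L * ?H * Jm q j * rho = 0\<^sub>m q q" unfolding orth using rhoc by simp
    moreover have "L * ?H * Jm q j * rho = U + V"
    proof -
      have c1: "?P * adj (vv q j) \<in> carrier_mat q ?N" using Pc by (intro carrier_matI) auto
      have c2: "adj rho * adj B \<in> carrier_mat q ?N" using Bc rhoc by (intro carrier_matI) auto
      have "L * ?H * Jm q j * rho = (?P * adj (vv q j)) * (?H * Jm q j * rho) + (adj rho * adj B) * (?H * Jm q j * rho)"
        unfolding Ld using add_mult_distrib_mat[OF c1 c2, of "?H * Jm q j * rho" q] rhoc Bc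
        by (simp add: assoc_dims carrier_matD)
      also have "\<dots> = U + V" unfolding U_def V_def using Pc Bc rhoc KBr by (simp add: assoc_dims carrier_matD)
      finally show ?thesis .
    qed
    ultimately show ?thesis by simp
  qed
  have PQ2: "?P * adj ?Q = W - V" unfolding PQ by (rule mat_neg_trick2[OF Uc Vc Wc UV])
  have WVh: "adj (W - V) = W - V"
  proof -
    have "adj W = W" unfolding W_def using Pc c0c c0h by (simp add: adj_mult_dims assoc_dims carrier_matD)
    moreover have "adj V = V" unfolding V_def using Bc rhoc Kh by (simp add: adj_mult_dims assoc_dims carrier_matD)
    ultimately show ?thesis using adj_minus[OF Wc Vc] by simp
  qed
  show "?P * adj ?Q = ?Q * adj ?P"
  proof -
    have "?Q * adj ?P = adj (?P * adj ?Q)" using Pc Qc by (simp add: adj_mult_dims)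
    thus ?thesis unfolding PQ2 WVh by simp
  qed
qed


lemma dodd_alg:
  fixes G T Ki m :: "complex mat" and c :: complex
  assumes G: "G \<in> carrier_mat q q" and T: "T \<in> carrier_mat q q" and Ki: "Ki \<in> carrier_mat q q"
    and Ginv: "invertible_mat G" and m: "m = adj G * Ki * G" and TG: "T * adj G = G * adj T"
  shows "blk2 (1\<^sub>m q - c \<cdot>\<^sub>m (adj T * Ki * G)) (c \<cdot>\<^sub>m (adj T * Ki * T))
             (- (c \<cdot>\<^sub>m (adj G * Ki * G))) (1\<^sub>m q + c \<cdot>\<^sub>m (adj G * Ki * T))
       = blk2 (1\<^sub>m q) (minv G * T) (0\<^sub>m q q) (1\<^sub>m q)
         * blk2 (1\<^sub>m q) (0\<^sub>m q q) (- (c \<cdot>\<^sub>m m)) (1\<^sub>m q)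
         * blk2 (1\<^sub>m q) (- (minv G * T)) (0\<^sub>m q q) (1\<^sub>m q)"
proof -
  note Gi = minv[OF Ginv G]
  define r where "r = minv G * T"
  have rc: "r \<in> carrier_mat q q" unfolding r_def using Gi T by auto
  have mc: "m \<in> carrier_mat q q" unfolding m using G Ki by auto
  have Gd: "dim_row G = q" "dim_col G = q" "dim_row T = q" "dim_col T = q" "dim_row Ki = q" "dim_col Ki = q"
    "dim_row (minv G) = q" "dim_col (minv G) = q" using G T Ki Gi by auto
  have rm: "r * m = adj T * Ki * G"
  proof -
    have "r * m = minv G * (T * adj G) * Ki * G" unfolding r_def m using Gd by (simp add: assoc_dims)
    also have "\<dots> = (minv G * G) * adj T * Ki * G" unfolding TG using Gd by (simp add: assoc_dims)
    finally show ?thesis using Gi Gd by simp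
  qed
  have mr: "m * r = adj G * Ki * T"
  proof -
    have "m * r = adj G * Ki * (G * minv G) * T" unfolding r_def m using Gd by (simp add: assoc_dims)
    thus ?thesis using Gi Gd by simp
  qed
  have rmr: "r * (m * r) = adj T * Ki * T"
  proof -
    have "r * (m * r) = (r * m) * r" using rc mc by (simp add: assoc_dims carrier_matD)
    also have "\<dots> = (adj T * Ki * G) * r" unfolding rm ..
    also have "\<dots> = adj T * Ki * (G * minv G) * T" unfolding r_def using Gd by (simp add: assoc_dims)
    finally show ?thesis using Gi Gd by simp
  qed
  have cm: "c \<cdot>\<^sub>m m \<in> carrier_mat q q" using mc by simp
  have M23: "blk2 (1\<^sub>m q) (0\<^sub>m q q) (- (c \<cdot>\<^sub>m m)) (1\<^sub>m q) * blk2 (1\<^sub>m q) (- r) (0\<^sub>m q q) (1\<^sub>m q)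
      = blk2 (1\<^sub>m q) (- r) (- (c \<cdot>\<^sub>m m)) (c \<cdot>\<^sub>m (m * r) + 1\<^sub>m q)"
  proof -
    have "blk2 (1\<^sub>m q) (0\<^sub>m q q) (- (c \<cdot>\<^sub>m m)) (1\<^sub>m q) * blk2 (1\<^sub>m q) (- r) (0\<^sub>m q q) (1\<^sub>m q)
       = blk2 (1\<^sub>m q * 1\<^sub>m q + 0\<^sub>m q q * 0\<^sub>m q q) (1\<^sub>m q * - r + 0\<^sub>m q q * 1\<^sub>m q)
              (- (c \<cdot>\<^sub>m m) * 1\<^sub>m q + 1\<^sub>m q * 0\<^sub>m q q) (- (c \<cdot>\<^sub>m m) * - r + 1\<^sub>m q * 1\<^sub>m q)"
      by (rule mult_four_block_mat) (use rc mc in auto)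
    also have "- (c \<cdot>\<^sub>m m) * - r = c \<cdot>\<^sub>m (m * r)"
      using rc mc by (simp add: mult_smult_assoc_mat[of m q q r q] carrier_matD)
    finally show ?thesis using rc mc by simp
  qed
  have "blk2 (1\<^sub>m q) r (0\<^sub>m q q) (1\<^sub>m q) * blk2 (1\<^sub>m q) (- r) (- (c \<cdot>\<^sub>m m)) (c \<cdot>\<^sub>m (m * r) + 1\<^sub>m q)
      = blk2 (1\<^sub>m q * 1\<^sub>m q + r * - (c \<cdot>\<^sub>m m)) (1\<^sub>m q * - r + r * (c \<cdot>\<^sub>m (m * r) + 1\<^sub>m q))
             (0\<^sub>m q q * 1\<^sub>m q + 1\<^sub>m q * - (c \<cdot>\<^sub>m m)) (0\<^sub>m q q * - r + 1\<^sub>m q * (c \<cdot>\<^sub>m (m * r) + 1\<^sub>m q))"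
    by (rule mult_four_block_mat) (use rc mc in auto)
  also have "1\<^sub>m q * 1\<^sub>m q + r * - (c \<cdot>\<^sub>m m) = 1\<^sub>m q - c \<cdot>\<^sub>m (adj T * Ki * G)"
  proof -
    have "r * - (c \<cdot>\<^sub>m m) = - (c \<cdot>\<^sub>m (r * m))" using rc mc by (simp add: mult_smult_distrib[of r q q m q] carrier_matD)
    thus ?thesis unfolding rm[symmetric] by (intro eq_matI) (use rc mc in auto)
  qed
  also have "1\<^sub>m q * - r + r * (c \<cdot>\<^sub>m (m * r) + 1\<^sub>m q) = c \<cdot>\<^sub>m (adj T * Ki * T)"
  proof -
    have "r * (c \<cdot>\<^sub>m (m * r) + 1\<^sub>m q) = c \<cdot>\<^sub>m (r * (m * r)) + r"
      using rc mc by (simp add: mult_add_distrib_mat[of r q q _ q] mult_smult_distrib[of r q q _ q] carrier_matD)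
    thus ?thesis unfolding rmr[symmetric] by (intro eq_matI) (use rc mc in auto)
  qed
  also have "0\<^sub>m q q * 1\<^sub>m q + 1\<^sub>m q * - (c \<cdot>\<^sub>m m) = - (c \<cdot>\<^sub>m (adj G * Ki * G))"
    unfolding m[symmetric] using mc by (intro eq_matI) auto
  also have "0\<^sub>m q q * - r + 1\<^sub>m q * (c \<cdot>\<^sub>m (m * r) + 1\<^sub>m q) = 1\<^sub>m q + c \<cdot>\<^sub>m (adj G * Ki * T)"
    unfolding mr[symmetric] using rc mc by (intro eq_matI) auto
  finally have fin: "blk2 (1\<^sub>m q) r (0\<^sub>m q q) (1\<^sub>m q) * blk2 (1\<^sub>m q) (- r) (- (c \<cdot>\<^sub>m m)) (c \<cdot>\<^sub>m (m * r) + 1\<^sub>m q)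
     = blk2 (1\<^sub>m q - c \<cdot>\<^sub>m (adj T * Ki * G)) (c \<cdot>\<^sub>m (adj T * Ki * T))
             (- (c \<cdot>\<^sub>m (adj G * Ki * G))) (1\<^sub>m q + c \<cdot>\<^sub>m (adj G * Ki * T))" .
  have c1: "blk2 (1\<^sub>m q) r (0\<^sub>m q q) (1\<^sub>m q) \<in> carrier_mat (q+q) (q+q)" using rc by auto
  have c2: "blk2 (1\<^sub>m q) (0\<^sub>m q q) (- (c \<cdot>\<^sub>m m)) (1\<^sub>m q) \<in> carrier_mat (q+q) (q+q)" using mc by auto
  have c3: "blk2 (1\<^sub>m q) (- r) (0\<^sub>m q q) (1\<^sub>m q) \<in> carrier_mat (q+q) (q+q)" using rc by auto
  show ?thesis unfolding r_def[symmetric] assoc_mult_mat[OF c1 c2 c3] M23 fin ..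
qed


lemma deven_alg:
  fixes P Q Hi l :: "complex mat" and c :: complex
  assumes P: "P \<in> carrier_mat q q" and Q: "Q \<in> carrier_mat q q" and Hi: "Hi \<in> carrier_mat q q"
    and Qinv: "invertible_mat Q" and l: "l = adj Q * Hi * Q" and PQ: "P * adj Q = Q * adj P"
  shows "blk2 (1\<^sub>m q + c \<cdot>\<^sub>m (adj Q * Hi * P)) (c \<cdot>\<^sub>m (adj Q * Hi * Q))
             (- (c \<cdot>\<^sub>m (adj P * Hi * P))) (1\<^sub>m q - c \<cdot>\<^sub>m (adj P * Hi * Q))
       = blk2 (1\<^sub>m q) (0\<^sub>m q q) (- (minv Q * P)) (1\<^sub>m q)
         * blk2 (1\<^sub>m q) (c \<cdot>\<^sub>m l) (0\<^sub>m q q) (1\<^sub>m q)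
         * blk2 (1\<^sub>m q) (0\<^sub>m q q) (minv Q * P) (1\<^sub>m q)"
proof -
  note Qi = minv[OF Qinv Q]
  define t where "t = minv Q * P"
  have tc: "t \<in> carrier_mat q q" unfolding t_def using Qi P by auto
  have lc: "l \<in> carrier_mat q q" unfolding l using Q Hi by auto
  have Gd: "dim_row P = q" "dim_col P = q" "dim_row Q = q" "dim_col Q = q" "dim_row Hi = q" "dim_col Hi = q"
    "dim_row (minv Q) = q" "dim_col (minv Q) = q" using P Q Hi Qi by auto
  have lt: "l * t = adj Q * Hi * P"
  proof -
    have "l * t = adj Q * Hi * (Q * minv Q) * P" unfolding t_def l using Gd by (simp add: assoc_dims)
    thus ?thesis using Qi Gd by simp
  qed
  have tl: "t * l = adj P * Hi * Q"
  proof -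
    have "t * l = minv Q * (P * adj Q) * Hi * Q" unfolding t_def l using Gd by (simp add: assoc_dims)
    also have "\<dots> = (minv Q * Q) * adj P * Hi * Q" unfolding PQ using Gd by (simp add: assoc_dims)
    finally show ?thesis using Qi Gd by simp
  qed
  have tlt: "t * (l * t) = adj P * Hi * P"
  proof -
    have "t * (l * t) = (t * l) * t" using tc lc by (simp add: assoc_dims carrier_matD)
    also have "\<dots> = (adj P * Hi * Q) * t" unfolding tl ..
    also have "\<dots> = adj P * Hi * (Q * minv Q) * P" unfolding t_def using Gd by (simp add: assoc_dims)
    finally show ?thesis using Qi Gd by simp
  qed
  have M23: "blk2 (1\<^sub>m q) (c \<cdot>\<^sub>m l) (0\<^sub>m q q) (1\<^sub>m q) * blk2 (1\<^sub>m q) (0\<^sub>m q q) t (1\<^sub>m q)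
      = blk2 (1\<^sub>m q + c \<cdot>\<^sub>m (l * t)) (c \<cdot>\<^sub>m l) t (1\<^sub>m q)"
  proof -
    have "blk2 (1\<^sub>m q) (c \<cdot>\<^sub>m l) (0\<^sub>m q q) (1\<^sub>m q) * blk2 (1\<^sub>m q) (0\<^sub>m q q) t (1\<^sub>m q)
       = blk2 (1\<^sub>m q * 1\<^sub>m q + c \<cdot>\<^sub>m l * t) (1\<^sub>m q * 0\<^sub>m q q + c \<cdot>\<^sub>m l * 1\<^sub>m q)
              (0\<^sub>m q q * 1\<^sub>m q + 1\<^sub>m q * t) (0\<^sub>m q q * 0\<^sub>m q q + 1\<^sub>m q * 1\<^sub>m q)"
      by (rule mult_four_block_mat) (use tc lc in auto)
    also have "c \<cdot>\<^sub>m l * t = c \<cdot>\<^sub>m (l * t)" by (rule mult_smult_assoc_mat[OF lc tc])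
    finally show ?thesis using tc lc by simp
  qed
  have "blk2 (1\<^sub>m q) (0\<^sub>m q q) (- t) (1\<^sub>m q) * blk2 (1\<^sub>m q + c \<cdot>\<^sub>m (l * t)) (c \<cdot>\<^sub>m l) t (1\<^sub>m q)
      = blk2 (1\<^sub>m q * (1\<^sub>m q + c \<cdot>\<^sub>m (l * t)) + 0\<^sub>m q q * t) (1\<^sub>m q * (c \<cdot>\<^sub>m l) + 0\<^sub>m q q * 1\<^sub>m q)
             (- t * (1\<^sub>m q + c \<cdot>\<^sub>m (l * t)) + 1\<^sub>m q * t) (- t * (c \<cdot>\<^sub>m l) + 1\<^sub>m q * 1\<^sub>m q)"
    by (rule mult_four_block_mat) (use tc lc in auto)
  also have "1\<^sub>m q * (1\<^sub>m q + c \<cdot>\<^sub>m (l * t)) + 0\<^sub>m q q * t = 1\<^sub>m q + c \<cdot>\<^sub>m (adj Q * Hi * P)"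
    unfolding lt[symmetric] using tc lc by (intro eq_matI) auto
  also have "1\<^sub>m q * (c \<cdot>\<^sub>m l) + 0\<^sub>m q q * 1\<^sub>m q = c \<cdot>\<^sub>m (adj Q * Hi * Q)"
    unfolding l[symmetric] using lc by (intro eq_matI) auto
  also have "- t * (1\<^sub>m q + c \<cdot>\<^sub>m (l * t)) + 1\<^sub>m q * t = - (c \<cdot>\<^sub>m (adj P * Hi * P))"
  proof -
    have "- t * (1\<^sub>m q + c \<cdot>\<^sub>m (l * t)) = - (t + c \<cdot>\<^sub>m (t * (l * t)))"
      using tc lc by (simp add: mult_add_distrib_mat[of t q q _ q] mult_smult_distrib[of t q q _ q] carrier_matD)
    thus ?thesis unfolding tlt[symmetric] by (intro eq_matI) (use tc lc in auto)
  qed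
  also have "- t * (c \<cdot>\<^sub>m l) + 1\<^sub>m q * 1\<^sub>m q = 1\<^sub>m q - c \<cdot>\<^sub>m (adj P * Hi * Q)"
  proof -
    have "- t * (c \<cdot>\<^sub>m l) = - (c \<cdot>\<^sub>m (t * l))" using tc lc by (simp add: mult_smult_distrib[of t q q l q] carrier_matD)
    thus ?thesis unfolding tl[symmetric] by (intro eq_matI) (use tc lc in auto)
  qed
  finally have fin: "blk2 (1\<^sub>m q) (0\<^sub>m q q) (- t) (1\<^sub>m q) * blk2 (1\<^sub>m q + c \<cdot>\<^sub>m (l * t)) (c \<cdot>\<^sub>m l) t (1\<^sub>m q)
     = blk2 (1\<^sub>m q + c \<cdot>\<^sub>m (adj Q * Hi * P)) (c \<cdot>\<^sub>m (adj Q * Hi * Q))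
             (- (c \<cdot>\<^sub>m (adj P * Hi * P))) (1\<^sub>m q - c \<cdot>\<^sub>m (adj P * Hi * Q))" .
  have c1: "blk2 (1\<^sub>m q) (0\<^sub>m q q) (- t) (1\<^sub>m q) \<in> carrier_mat (q+q) (q+q)" using tc by auto
  have c2: "blk2 (1\<^sub>m q) (c \<cdot>\<^sub>m l) (0\<^sub>m q q) (1\<^sub>m q) \<in> carrier_mat (q+q) (q+q)" using lc by auto
  have c3: "blk2 (1\<^sub>m q) (0\<^sub>m q q) t (1\<^sub>m q) \<in> carrier_mat (q+q) (q+q)" using tc by auto
  show ?thesis unfolding t_def[symmetric] assoc_mult_mat[OF c1 c2 c3] M23 fin ..
qed


lemma bmat_11: assumes "0 < q" "f 0 0 \<in> carrier_mat q q" shows "bmat q 1 1 f = f 0 0"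
  by (rule eq_matI) (use assms in \<open>auto simp: bmat_def\<close>)

lemma bcol_1: assumes "0 < q" "f 0 \<in> carrier_mat q q" shows "bcol q 1 f = f 0"
  by (rule eq_matI) (use assms in \<open>auto simp: bcol_def bmat_def\<close>)

lemma odd_zero:
  fixes q :: nat and a b :: real and s :: "nat \<Rightarrow> complex mat"
  assumes q: "0 < q"
    and s0: "s 0 \<in> carrier_mat q q" "adj (s 0) = s 0" and s1: "s 1 \<in> carrier_mat q q" "adj (s 1) = s 1"
    and W0: "wpd q (K1 q b s 0)"
  shows "Gam1 q b s 0 (complex_of_real a) = 1\<^sub>m q"
    "The1 q b s 0 (complex_of_real a) = s 0"
    "Khat1 q b s 0 \<in> carrier_mat q q"
    "invertible_mat (Khat1 q b s 0)"
    "mbold q a b s 0 = adj (1\<^sub>m q) * minv (Khat1 q b s 0) * 1\<^sub>m q"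
proof -
  show "Gam1 q b s 0 (complex_of_real a) = 1\<^sub>m q" unfolding Gam1_def by simp
  show "The1 q b s 0 (complex_of_real a) = s 0" unfolding The1_def by simp
  have cc: "cK b s 0 \<in> carrier_mat q q" using s1 by (simp add: cK_def minus_carrier_mat)
  have eK: "K1 q b s 0 = cK b s 0" unfolding K1_hankel using bmat_11[OF q, of "\<lambda>l k. cK b s (l+k)"] cc by simp
  have eKh: "Khat1 q b s 0 = cK b s 0" unfolding Khat1_def cK_def by simp
  show "Khat1 q b s 0 \<in> carrier_mat q q" unfolding eKh by (rule cc)
  have Kinv: "invertible_mat (K1 q b s 0)" by (rule wpd_inv[OF W0])
  thus "invertible_mat (Khat1 q b s 0)" unfolding eKh eK .
  have one: "(1::complex) \<cdot>\<^sub>m 1\<^sub>m q = 1\<^sub>m q" by (rule eq_matI) auto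
  have ex: "xm q 0 a = 1\<^sub>m q" unfolding xm_def using bcol_1[OF q, of "\<lambda>l. complex_of_real a ^ l \<cdot>\<^sub>m 1\<^sub>m q"] one by simp
  have "mbold q a b s 0 = mu q a b s 0" unfolding mbold_def by simp
  also have "\<dots> = adj (xm q 0 a) * minv (K1 q b s 0) * xm q 0 a" by (rule mu_form[OF q Kinv])
  finally show "mbold q a b s 0 = adj (1\<^sub>m q) * minv (Khat1 q b s 0) * 1\<^sub>m q" unfolding ex eKh eK .
qed

lemma even_zero:
  fixes q :: nat and a b :: real and s :: "nat \<Rightarrow> complex mat"
  assumes q: "0 < q"
    and s0: "s 0 \<in> carrier_mat q q" "adj (s 0) = s 0" and s1: "s 1 \<in> carrier_mat q q" "adj (s 1) = s 1"
    and s2: "s 2 \<in> carrier_mat q q" "adj (s 2) = s 2"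
    and W0: "wpd q (K1 q b s 0)" and WH0: "wpd q (H2 q a b s 0)"
  shows "P2 q a b s 0 (complex_of_real a) = 1\<^sub>m q"
    "Q2 q a b s 0 (complex_of_real a) = cK b s 0"
    "Hhat2 q a b s 0 \<in> carrier_mat q q"
    "invertible_mat (Hhat2 q a b s 0)"
    "invertible_mat (cK b s 0)"
    "adj (cK b s 0) = cK b s 0"
    "cK b s 0 \<in> carrier_mat q q"
    "lbold q a b s 0 = adj (cK b s 0) * minv (Hhat2 q a b s 0) * cK b s 0"
proof -
  show "P2 q a b s 0 (complex_of_real a) = 1\<^sub>m q" unfolding P2_def by simp
  have cc: "cK b s 0 \<in> carrier_mat q q" "adj (cK b s 0) = cK b s 0" using cK_herm[of s 0 q b] s0 s1 by auto
  show "cK b s 0 \<in> carrier_mat q q" "adj (cK b s 0) = cK b s 0" by (rule cc(1), rule cc(2))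
  show "Q2 q a b s 0 (complex_of_real a) = cK b s 0"
    unfolding Q2_def u20_def cK_def by (rule eq_matI) (use s0 s1 in \<open>auto simp: algebra_simps\<close>)
  have sh: "shat a b s 0 \<in> carrier_mat q q" using shat_herm[of s 0 q a b] s0 s1 s2 by (auto simp: numeral_2_eq_2)
  have eH: "H2 q a b s 0 = shat a b s 0" unfolding H2_hankel using bmat_11[OF q, of "\<lambda>l k. shat a b s (l+k)"] sh by simp
  have eHh: "Hhat2 q a b s 0 = shat a b s 0" unfolding Hhat2_def by simp
  show "Hhat2 q a b s 0 \<in> carrier_mat q q" unfolding eHh by (rule sh)
  have Hinv: "invertible_mat (H2 q a b s 0)" by (rule wpd_inv[OF WH0])
  thus "invertible_mat (Hhat2 q a b s 0)" unfolding eHh eH .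
  have eK: "K1 q b s 0 = cK b s 0" unfolding K1_hankel using bmat_11[OF q, of "\<lambda>l k. cK b s (l+k)"] cc by simp
  show "invertible_mat (cK b s 0)" using wpd_inv[OF W0] unfolding eK .
  have sj: "\<And>l. l \<le> 0+1 \<Longrightarrow> s l \<in> carrier_mat q q" using s0 s1 by (auto simp: le_Suc_eq)
  have ec: "cvec q b s 0 = cK b s 0" unfolding cvec_def using bcol_1[OF q, of "cK b s"] cc by simp
  have "lbold q a b s 0 = lam q a b s 0" unfolding lbold_def by simp
  also have "\<dots> = adj (cvec q b s 0) * minv (H2 q a b s 0) * cvec q b s 0" by (rule lam_form[OF q sj Hinv])
  finally show "lbold q a b s 0 = adj (cK b s 0) * minv (Hhat2 q a b s 0) * cK b s 0" unfolding ec eHh eH .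
qed


lemma one_invertible: "invertible_mat (1\<^sub>m q :: complex mat)"
  unfolding invertible_mat_def inverts_mat_def by (intro conjI exI[of _ "1\<^sub>m q"]) auto

theorem mainTheorem5:
  fixes q n :: nat and a b :: real and s :: "nat \<Rightarrow> complex mat"
  assumes "q \<ge> 1" and "n \<ge> 1" and "a < b"
    and "\<And>j. j \<le> 2*n+1 \<Longrightarrow> s j \<in> carrier_mat q q \<and> adj (s j) = s j"
    and "pos_def (H1 q s n)" and "pos_def (H2 q a b s (n-1))"
    and "pos_def (K1 q b s n)" and "pos_def (K2 q a s n)"
  shows "(\<forall>j\<le>n. invertible_mat (Gam1 q b s j (complex_of_real a)))
       \<and> (\<forall>j<n. invertible_mat (Q2 q a b s j (complex_of_real a)))
       \<and> (\<forall>j\<le>n. \<forall>z::complex.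
            dodd q a b s j z =
              (let r = minv (Gam1 q b s j (complex_of_real a)) * The1 q b s j (complex_of_real a)
               in blk2 (1\<^sub>m q) r (0\<^sub>m q q) (1\<^sub>m q)
                * blk2 (1\<^sub>m q) (0\<^sub>m q q) (- ((z - complex_of_real a) \<cdot>\<^sub>m mbold q a b s j)) (1\<^sub>m q)
                * blk2 (1\<^sub>m q) (- r) (0\<^sub>m q q) (1\<^sub>m q)))
       \<and> (\<forall>j<n. \<forall>z::complex.
            deven q a b s j z =
              (let t = minv (Q2 q a b s j (complex_of_real a)) * P2 q a b s j (complex_of_real a)
               in blk2 (1\<^sub>m q) (0\<^sub>m q q) (- t) (1\<^sub>m q)
                * blk2 (1\<^sub>m q) ((z - complex_of_real a) \<cdot>\<^sub>m lbold q a b s j) (0\<^sub>m q q) (1\<^sub>m q)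
                * blk2 (1\<^sub>m q) (0\<^sub>m q q) t (1\<^sub>m q)))"
proof -
  let ?a = "complex_of_real a"
  have q: "0 < q" using assms(1) by simp
  have n: "1 \<le> n" by (rule assms(2))
  note sA = assms(4)
  have WK: "wpd ((n+1)*q) (K1 q b s n)" by (rule pos_def_wpd[OF assms(7) K1_carrier])
  have n1: "n - 1 + 1 = n" using n by simp
  have WH: "wpd (n*q) (H2 q a b s (n-1))"
  proof -
    have "H2 q a b s (n-1) \<in> carrier_mat (n*q) (n*q)" using H2_carrier[of q a b s "n-1"] unfolding n1 .
    thus ?thesis by (rule pos_def_wpd[OF assms(6)])
  qed
  have W0: "wpd q (K1 q b s 0)"
    using wpd_principal[OF WK[unfolded K1_hankel], of 1] unfolding K1_hankel by simp
  have WH0: "wpd q (H2 q a b s 0)"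
  proof -
    have "wpd (n*q) (bmat q n n (\<lambda>l k. shat a b s (l+k)))" using WH unfolding H2_hankel n1 .
    from wpd_principal[OF this, of 1] n show ?thesis unfolding H2_hankel by simp
  qed
  have s0: "s 0 \<in> carrier_mat q q" "adj (s 0) = s 0" using sA[of 0] by auto
  have s1: "s 1 \<in> carrier_mat q q" "adj (s 1) = s 1" using sA[of 1] by auto
  have s2: "s 2 \<in> carrier_mat q q" "adj (s 2) = s 2" using sA[of 2] n by auto
  have odd: "\<And>j. j \<le> n \<Longrightarrow> Gam1 q b s j ?a \<in> carrier_mat q q \<and> The1 q b s j ?a \<in> carrier_mat q q
      \<and> Khat1 q b s j \<in> carrier_mat q q \<and> invertible_mat (Khat1 q b s j)
      \<and> mbold q a b s j = adj (Gam1 q b s j ?a) * minv (Khat1 q b s j) * Gam1 q b s j ?a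
      \<and> invertible_mat (Gam1 q b s j ?a)
      \<and> The1 q b s j ?a * adj (Gam1 q b s j ?a) = Gam1 q b s j ?a * adj (The1 q b s j ?a)"
  proof -
    fix j assume j: "j \<le> n"
    show "?thesis j"
    proof (cases "j = 0")
      case True
      note oz = odd_zero[OF q s0 s1 W0]
      show ?thesis unfolding True oz(1) oz(2) using oz(3-5) s0 one_invertible[of q] by simp
    next
      case False
      hence j1: "1 \<le> j" by simp
      note os = odd_step[OF q j1 j sA WK WH]
      show ?thesis using os by simp
    qed
  qed
  have even: "\<And>j. j < n \<Longrightarrow> P2 q a b s j ?a \<in> carrier_mat q q \<and> Q2 q a b s j ?a \<in> carrier_mat q q
      \<and> Hhat2 q a b s j \<in> carrier_mat q q \<and> invertible_mat (Hhat2 q a b s j)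
      \<and> lbold q a b s j = adj (Q2 q a b s j ?a) * minv (Hhat2 q a b s j) * Q2 q a b s j ?a
      \<and> invertible_mat (Q2 q a b s j ?a)
      \<and> P2 q a b s j ?a * adj (Q2 q a b s j ?a) = Q2 q a b s j ?a * adj (P2 q a b s j ?a)"
  proof -
    fix j assume j: "j < n"
    show "?thesis j"
    proof (cases "j = 0")
      case True
      note ez = even_zero[OF q s0 s1 s2 W0 WH0]
      have c: "cK b s 0 \<in> carrier_mat q q" by (rule ez(7))
      show ?thesis unfolding True ez(1) ez(2) using ez(3-8) c by simp
    next
      case False
      hence j1: "1 \<le> j" by simp
      note es = even_step[OF q j1 j sA WK WH]
      show ?thesis using es by simp
    qed
  qed
  show ?thesis
  proof (intro conjI allI impI)
    fix j assume "j \<le> n" thus "invertible_mat (Gam1 q b s j ?a)" using odd by blast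
  next
    fix j assume "j < n" thus "invertible_mat (Q2 q a b s j ?a)" using even by blast
  next
    fix j z assume j: "j \<le> n"
    note o = odd[OF j]
    have Kic: "minv (Khat1 q b s j) \<in> carrier_mat q q" using minv(1) o by blast
    show "dodd q a b s j z =
              (let r = minv (Gam1 q b s j ?a) * The1 q b s j ?a
               in blk2 (1\<^sub>m q) r (0\<^sub>m q q) (1\<^sub>m q)
                * blk2 (1\<^sub>m q) (0\<^sub>m q q) (- ((z - ?a) \<cdot>\<^sub>m mbold q a b s j)) (1\<^sub>m q)
                * blk2 (1\<^sub>m q) (- r) (0\<^sub>m q q) (1\<^sub>m q))"
      unfolding dodd_def Let_def
      by (rule dodd_alg) (use o Kic in auto)
  next
    fix j z assume j: "j < n"
    note e = even[OF j]
    have Hic: "minv (Hhat2 q a b s j) \<in> carrier_mat q q" using minv(1) e by blast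
    show "deven q a b s j z =
              (let t = minv (Q2 q a b s j ?a) * P2 q a b s j ?a
               in blk2 (1\<^sub>m q) (0\<^sub>m q q) (- t) (1\<^sub>m q)
                * blk2 (1\<^sub>m q) ((z - ?a) \<cdot>\<^sub>m lbold q a b s j) (0\<^sub>m q q) (1\<^sub>m q)
                * blk2 (1\<^sub>m q) (0\<^sub>m q q) t (1\<^sub>m q))"
      unfolding deven_def Let_def
      by (rule deven_alg) (use e Hic in auto)
  qed
qed

end
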